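(* Suppose a subshift $X_0^+\subset\mathcal A^\mathbb N$ has a word complexity function that grows at most polynomially and is the smallest subshift which supports all its invariant measures. Then the potential $\phi$ defined by $\phi(x)=0$ if $x\in X_0^+$ and $\phi(x)=-a_j$ if $\mathrm{dist}(x,X_0^+)=2^{-j}$ freezes on $X_0^+$ provided $(a_j)$ is a decreasing sequence satisfying $a_j\ge\frac{\log^2 j}{j}$, $j\in\mathbb N$. *)

theory Defs
  imports "HOL-Probability.Probability"
begin

definition shift :: "(nat \<Rightarrow> 'a) \<Rightarrow> (nat \<Rightarrow> 'a)" where
  "shift x = (\<lambda>n. x (Suc n))"

definition sdist :: "(nat \<Rightarrow> 'a) \<Rightarrow> (nat \<Rightarrow> 'a) \<Rightarrow> real" where
  "sdist x y = (if x = y then 0 else (1/2) ^ (LEAST i. x i \<noteq> y i))"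

definition shift_setdist :: "(nat \<Rightarrow> 'a) \<Rightarrow> (nat \<Rightarrow> 'a) set \<Rightarrow> real" where
  "shift_setdist x X = Inf (sdist x ` X)"

text \<open>Closedness in the product (cylinder) topology.\<close>
definition shift_closed :: "(nat \<Rightarrow> 'a) set \<Rightarrow> bool" where
  "shift_closed X \<longleftrightarrow> (\<forall>x. (\<forall>n. \<exists>y\<in>X. \<forall>i<n. x i = y i) \<longrightarrow> x \<in> X)"

definition subshift :: "(nat \<Rightarrow> 'a) set \<Rightarrow> bool" where
  "subshift X \<longleftrightarrow> X \<noteq> {} \<and> shift_closed X \<and> shift ` X \<subseteq> X"

definition language :: "(nat \<Rightarrow> 'a) set \<Rightarrow> nat \<Rightarrow> 'a list set" where
  "language X n = {map x [0..<n] | x. x \<in> X}"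

definition complexity :: "(nat \<Rightarrow> 'a) set \<Rightarrow> nat \<Rightarrow> nat" where
  "complexity X n = card (language X n)"

definition polynomial_complexity :: "(nat \<Rightarrow> 'a) set \<Rightarrow> bool" where
  "polynomial_complexity X \<longleftrightarrow>
     (\<exists>C::real. \<exists>d::nat. \<forall>n\<ge>1. real (complexity X n) \<le> C * real n ^ d)"

text \<open>Measurable structure of the full shift (product of discrete spaces = Borel).\<close>
definition shift_space :: "(nat \<Rightarrow> 'a) measure" where
  "shift_space = PiM UNIV (\<lambda>_. count_space UNIV)"

definition cyl :: "'a list \<Rightarrow> (nat \<Rightarrow> 'a) set" where
  "cyl w = {x. \<forall>i<length w. x i = w ! i}"

definition inv_measure :: "(nat \<Rightarrow> 'a) measure \<Rightarrow> bool" where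
  "inv_measure \<mu> \<longleftrightarrow> sets \<mu> = sets shift_space \<and> prob_space \<mu> \<and>
     (\<forall>A\<in>sets shift_space. emeasure \<mu> (shift -` A) = emeasure \<mu> A)"

definition inv_measure_on :: "(nat \<Rightarrow> 'a) set \<Rightarrow> (nat \<Rightarrow> 'a) measure \<Rightarrow> bool" where
  "inv_measure_on X \<mu> \<longleftrightarrow> inv_measure \<mu> \<and> emeasure \<mu> X = 1"

definition minimal_support :: "(nat \<Rightarrow> 'a) set \<Rightarrow> bool" where
  "minimal_support X \<longleftrightarrow>
     (\<forall>Y. subshift Y \<and> (\<forall>\<mu>. inv_measure_on X \<mu> \<longrightarrow> emeasure \<mu> Y = 1) \<longrightarrow> X \<subseteq> Y)"

text \<open>Kolmogorov-Sinai entropy of an invariant measure on the full shift, computed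
  with respect to the generating partition into 1-cylinders.\<close>
definition block_entropy :: "(nat \<Rightarrow> 'a::finite) measure \<Rightarrow> nat \<Rightarrow> real" where
  "block_entropy \<mu> n =
     (\<Sum>w\<in>{w::'a list. length w = n}. - measure \<mu> (cyl w) * ln (measure \<mu> (cyl w)))"

definition ks_entropy :: "(nat \<Rightarrow> 'a::finite) measure \<Rightarrow> real" where
  "ks_entropy \<mu> = lim (\<lambda>n. block_entropy \<mu> n / real n)"

text \<open>Pressure (variational definition) and equilibrium states on the full shift.\<close>
definition pressure :: "((nat \<Rightarrow> 'a::finite) \<Rightarrow> real) \<Rightarrow> real" where
  "pressure \<psi> = Sup {ks_entropy \<nu> + integral\<^sup>L \<nu> \<psi> | \<nu>. inv_measure \<nu>}"

definition equilibrium_state :: "((nat \<Rightarrow> 'a::finite) \<Rightarrow> real) \<Rightarrow> (nat \<Rightarrow> 'a) measure \<Rightarrow> bool" where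
  "equilibrium_state \<psi> \<mu> \<longleftrightarrow> inv_measure \<mu> \<and> ks_entropy \<mu> + integral\<^sup>L \<mu> \<psi> = pressure \<psi>"

text \<open>Topological entropy of X via the variational principle, and measures of maximal entropy.\<close>
definition top_entropy :: "(nat \<Rightarrow> 'a::finite) set \<Rightarrow> real" where
  "top_entropy X = Sup {ks_entropy \<nu> | \<nu>. inv_measure_on X \<nu>}"

definition max_entropy_measure_on :: "(nat \<Rightarrow> 'a::finite) set \<Rightarrow> (nat \<Rightarrow> 'a) measure \<Rightarrow> bool" where
  "max_entropy_measure_on X \<mu> \<longleftrightarrow> inv_measure_on X \<mu> \<and> ks_entropy \<mu> = top_entropy X"

definition freezes_on :: "((nat \<Rightarrow> 'a::finite) \<Rightarrow> real) \<Rightarrow> (nat \<Rightarrow> 'a) set \<Rightarrow> bool" where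
  "freezes_on \<phi> X \<longleftrightarrow>
     (\<exists>\<beta>0::real. \<forall>\<beta>>\<beta>0.
        pressure (\<lambda>x. \<beta> * \<phi> x) = top_entropy X \<and>
        (\<forall>\<mu>. equilibrium_state (\<lambda>x. \<beta> * \<phi> x) \<mu> \<longleftrightarrow> max_entropy_measure_on X \<mu>))"

end

theory Submission
  imports Defs "HOL-Real_Asymp.Real_Asymp"
begin

lemma key_ineq:
  fixes Cy K \<gamma> \<beta> :: real and d l q :: nat and A :: real
  assumes Cy: "Cy \<ge> 1" and l: "l \<ge> 1"
    and Kdef: "K = ln Cy / ln 2 + real d + 2" and gdef: "\<gamma> = K / ln 2" and bdef: "\<beta> = 64 * \<gamma>"
    and A: "A \<ge> ln (real (q + l) + 1) ^ 2 / (4 * (real (q + l) + 1))"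
  shows "ln Cy + real d * ln (real l + 1) + ln (real l) + ln (real l + 1)
          + \<gamma> * ln (real l + 1) ^ 2 - \<gamma> * ln (real q + 1) ^ 2 \<le> \<beta> * real l * A"
proof -
  define u where "u = ln (real l + 1)"
  define v where "v = ln (real q + 1)"
  define w where "w = ln (real (q + l) + 1)"
  have l2: "ln 2 > (0::real)" by simp
  have u2: "u \<ge> ln 2" unfolding u_def using l by (subst ln_le_cancel_iff) auto
  have upos: "u > 0" using u2 l2 by linarith
  have v0: "v \<ge> 0" unfolding v_def by simp
  have wu: "w \<ge> u" unfolding w_def u_def by (subst ln_le_cancel_iff) auto
  have wv: "w \<ge> v" unfolding w_def v_def by (subst ln_le_cancel_iff) auto
  have lnl: "ln (real l) \<le> u" unfolding u_def using l by (subst ln_le_cancel_iff) auto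
  have lnCy: "ln Cy \<ge> 0" using Cy by simp
  have K0: "K \<ge> 0" unfolding Kdef using lnCy by simp
  have g0: "\<gamma> \<ge> 0" unfolding gdef using K0 by simp
  have lc: "ln Cy \<le> (ln Cy / ln 2) * u"
  proof -
    have "(ln Cy / ln 2) * u \<ge> (ln Cy / ln 2) * ln 2"
      using u2 lnCy by (intro mult_left_mono) auto
    thus ?thesis using l2 by simp
  qed
  have LHS: "ln Cy + real d * ln (real l + 1) + ln (real l) + ln (real l + 1)
          \<le> K * u"
    using lc lnl unfolding Kdef u_def[symmetric] by (simp add: algebra_simps)
  have A0: "A \<ge> 0" by (rule order.trans[OF _ A]) simp
  show ?thesis
  proof (cases "real q + 1 \<ge> 2 * (real l + 1)")
    case True
    have "v \<ge> u + ln 2"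
    proof -
      have "v \<ge> ln (2 * (real l + 1))" unfolding v_def using True by (subst ln_le_cancel_iff) auto
      moreover have "ln (2 * (real l + 1)) = ln 2 + ln (real l + 1)" by (rule ln_mult_pos) auto
      ultimately show ?thesis unfolding u_def by linarith
    qed
    hence "u^2 - v^2 \<le> - ln 2 * u"
    proof -
      have "v^2 - u^2 = (v - u) * (v + u)" by (simp add: power2_eq_square algebra_simps)
      also have "\<dots> \<ge> ln 2 * u"
        by (intro mult_mono) (use \<open>v \<ge> u + ln 2\<close> upos v0 l2 in linarith)+
      finally show ?thesis by simp
    qed
    hence "\<gamma> * (u^2 - v^2) \<le> \<gamma> * (- ln 2 * u)" using g0 by (rule mult_left_mono)
    also have "\<gamma> * (- ln 2 * u) = - K * u" unfolding gdef using l2 by simp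
    finally have "\<gamma> * (u^2 - v^2) \<le> - K * u" .
    moreover have "\<beta> * real l * A \<ge> 0" using A0 g0 unfolding bdef by simp
    ultimately show ?thesis using LHS unfolding u_def[symmetric] v_def[symmetric] by (simp add: algebra_simps)
  next
    case False
    hence "real q < real (2*l+1)" by simp
    hence "q \<le> 2 * l" by linarith
    hence "real q \<le> 2 * real l" by linarith
    hence "real (q + l) + 1 \<le> 4 * real l" using l by simp
    have "u^2 \<le> w^2" using wu upos by (simp add: power_mono)
    have "\<beta> * real l * A \<ge> \<beta> * real l * (w^2 / (4 * (real (q + l) + 1)))"
      using A g0 l unfolding bdef w_def by (intro mult_left_mono) auto
    also have "\<beta> * real l * (w^2 / (4 * (real (q + l) + 1))) \<ge> \<beta> * real l * (w^2 / (16 * real l))"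
      using \<open>real (q + l) + 1 \<le> 4 * real l\<close> g0 l unfolding bdef
      by (intro mult_left_mono divide_left_mono) auto
    also have "\<beta> * real l * (w^2 / (16 * real l)) = 4 * \<gamma> * w^2" using l unfolding bdef by simp
    finally have R0: "\<beta> * real l * A \<ge> 4 * \<gamma> * w^2" .
    have "4 * \<gamma> * u^2 \<le> 4 * \<gamma> * w^2" using \<open>u^2 \<le> w^2\<close> g0 by (intro mult_left_mono) auto
    hence R: "\<beta> * real l * A \<ge> 4 * \<gamma> * u^2" using R0 by linarith
    have "K * u \<le> \<gamma> * u^2"
    proof -
      have "K * u = \<gamma> * (ln 2 * u)" unfolding gdef using l2 by simp
      also have "\<dots> \<le> \<gamma> * (u * u)" using u2 upos g0 by (intro mult_left_mono mult_right_mono) auto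
      finally show ?thesis by (simp add: power2_eq_square)
    qed
    moreover have "\<gamma> * v^2 \<ge> 0" "\<gamma> * u^2 \<ge> 0" using g0 by simp_all
    ultimately show ?thesis using LHS R unfolding u_def[symmetric] v_def[symmetric] by linarith
  qed
qed

definition inL :: "(nat \<Rightarrow> 'a) set \<Rightarrow> 'a list \<Rightarrow> bool" where
  "inL X w \<longleftrightarrow> (\<exists>x\<in>X. \<forall>i<length w. x i = w ! i)"

lemma inL_take: "inL X w \<Longrightarrow> inL X (take j w)"
proof -
  assume "inL X w"
  then obtain x where x: "x \<in> X" "\<forall>i<length w. x i = w ! i" unfolding inL_def by blast
  have "\<forall>i<length (take j w). x i = take j w ! i" using x(2) by simp
  thus ?thesis using x(1) unfolding inL_def by blast
qed

lemma inL_appendD: "inL X (u @ v) \<Longrightarrow> inL X u"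
  using inL_take[of X "u @ v" "length u"] by simp

lemma inL_Nil: "X \<noteq> {} \<Longrightarrow> inL X []"
  unfolding inL_def by auto
lemma shift_iter_mem:
  assumes "shift ` X \<subseteq> X" "x \<in> X"
  shows "(\<lambda>i. x (i + k)) \<in> X"
proof (induction k)
  case 0 then show ?case using assms(2) by simp
next
  case (Suc k)
  have "shift (\<lambda>i. x (i + k)) \<in> shift ` X" using Suc by (rule imageI)
  hence "shift (\<lambda>i. x (i + k)) \<in> X" using assms(1) by (rule subsetD[rotated])
  moreover have "shift (\<lambda>i. x (i + k)) = (\<lambda>i. x (i + Suc k))" unfolding shift_def by simp
  ultimately show ?case by simp
qed

lemma inL_drop:
  assumes "shift ` X \<subseteq> X" "inL X w"
  shows "inL X (drop k w)"
proof -
  obtain x where x: "x \<in> X" "\<forall>i<length w. x i = w ! i" using assms(2) unfolding inL_def by blast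
  have A: "(\<lambda>i. x (i + k)) \<in> X" by (rule shift_iter_mem[OF assms(1) x(1)])
  have B: "\<forall>i<length (drop k w). x (i + k) = drop k w ! i"
  proof (intro allI impI)
    fix i assume "i < length (drop k w)"
    hence "i + k < length w" by simp
    hence "x (i + k) = w ! (i + k)" using x(2) by blast
    also have "\<dots> = w ! (k + i)" by (simp only: add.commute)
    also have "\<dots> = drop k w ! i" using \<open>i + k < length w\<close> by (intro nth_drop[symmetric]) simp
    finally show "x (i + k) = drop k w ! i" .
  qed
  show ?thesis unfolding inL_def
  proof (rule bexI[where x="\<lambda>i. x (i + k)"])
    show "\<forall>i<length (drop k w). (\<lambda>i. x (i + k)) i = drop k w ! i" using B by simp
  qed (rule A)
qed

definition jw :: "(nat \<Rightarrow> 'a) set \<Rightarrow> 'a list \<Rightarrow> nat" where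
  "jw X v = (GREATEST j. j \<le> length v \<and> inL X (take j v))"

lemma jw_props:
  assumes "X \<noteq> {}"
  shows "jw X v \<le> length v" "inL X (take (jw X v) v)"
    "\<And>j. j \<le> length v \<Longrightarrow> inL X (take j v) \<Longrightarrow> j \<le> jw X v"
proof -
  have P0: "0 \<le> length v \<and> inL X (take 0 v)" using inL_Nil[OF assms] by simp
  have B: "\<And>y. y \<le> length v \<and> inL X (take y v) \<Longrightarrow> y \<le> length v" by simp
  have "jw X v \<le> length v \<and> inL X (take (jw X v) v)"
    unfolding jw_def by (rule GreatestI_nat[where P="\<lambda>j. j \<le> length v \<and> inL X (take j v)", OF P0 B])
  thus "jw X v \<le> length v" "inL X (take (jw X v) v)" by auto
  fix j assume "j \<le> length v" "inL X (take j v)"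
  thus "j \<le> jw X v" unfolding jw_def
    by (intro Greatest_le_nat[where P="\<lambda>j. j \<le> length v \<and> inL X (take j v)", OF _ B]) auto
qed

lemma jw_append:
  assumes "X \<noteq> {}" "\<not> inL X u"
  shows "jw X (u @ v) \<le> jw X u"
proof -
  let ?j = "jw X (u @ v)"
  have i: "inL X (take ?j (u @ v))" by (rule jw_props(2)[OF assms(1)])
  have "?j \<le> length u"
  proof (rule ccontr)
    assume "\<not> ?j \<le> length u"
    hence "take ?j (u @ v) = u @ take (?j - length u) v" by simp
    with i have "inL X u" using inL_appendD by metis
    with assms(2) show False by simp
  qed
  moreover have "take ?j (u @ v) = take ?j u" using \<open>?j \<le> length u\<close> by simp
  ultimately show ?thesis using i jw_props(3)[OF assms(1)] by simp
qed

definition cp :: "(nat \<Rightarrow> 'a) set \<Rightarrow> (nat \<Rightarrow> real) \<Rightarrow> 'a list \<Rightarrow> real" where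
  "cp X a v = (if inL X v then 0 else a (jw X v))"

definition cost :: "(nat \<Rightarrow> 'a) set \<Rightarrow> (nat \<Rightarrow> real) \<Rightarrow> 'a list \<Rightarrow> real" where
  "cost X a w = (\<Sum>k<length w. cp X a (drop k w))"

definition Phi :: "(nat \<Rightarrow> 'a) set \<Rightarrow> (nat \<Rightarrow> real) \<Rightarrow> 'a list \<Rightarrow> nat \<Rightarrow> real" where
  "Phi X a x q = (\<Sum>k<length x. if inL X (drop k x) then a (length x - k + q) else a (jw X (drop k x)))"

lemma term_le:
  fixes a :: "nat \<Rightarrow> real"
  assumes "X \<noteq> {}" and anti: "\<And>j. a (Suc j) \<le> a j"
    and "k < length u" "\<not> inL X (drop k (u @ y))"
  shows "(if inL X (drop k u) then a (length u - k + length y) else a (jw X (drop k u)))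
           \<le> a (jw X (drop k (u @ y)))"
proof -
  have am: "\<And>i j. i \<le> j \<Longrightarrow> a j \<le> a i" using lift_Suc_antimono_le[of a] anti by blast
  have dk: "drop k (u @ y) = drop k u @ y" using assms(3) by simp
  show ?thesis
  proof (cases "inL X (drop k u)")
    case True
    have "jw X (drop k (u @ y)) \<le> length u - k + length y"
      using jw_props(1)[OF assms(1), of "drop k (u @ y)"] assms(3) by simp
    hence "a (length u - k + length y) \<le> a (jw X (drop k (u @ y)))" by (rule am)
    thus ?thesis using True by simp
  next
    case False
    have "jw X (drop k (u @ y)) \<le> jw X (drop k u)"
      unfolding dk by (rule jw_append[OF assms(1) False])
    hence "a (jw X (drop k u)) \<le> a (jw X (drop k (u @ y)))" by (rule am)
    thus ?thesis using False by simp
  qed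
qed

lemma Phi_split:
  fixes a :: "nat \<Rightarrow> real"
  assumes "X \<noteq> {}" and anti: "\<And>j. a (Suc j) \<le> a j"
    and bad: "\<And>k. k < length u \<Longrightarrow> \<not> inL X (drop k (u @ y))"
  shows "Phi X a (u @ y) q \<ge> Phi X a u (length y) + real (length y) * a (q + length y)"
proof -
  let ?x = "u @ y"
  let ?t = "\<lambda>k. if inL X (drop k ?x) then a (length ?x - k + q) else a (jw X (drop k ?x))"
  have am: "\<And>i j. i \<le> j \<Longrightarrow> a j \<le> a i" using lift_Suc_antimono_le[of a] anti by blast
  have split: "{..<length ?x} = {..<length u} \<union> {length u..<length ?x}" by auto
  have "Phi X a ?x q = (\<Sum>k<length u. ?t k) + (\<Sum>k\<in>{length u..<length ?x}. ?t k)"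
    unfolding Phi_def split by (rule sum.union_disjoint) auto
  moreover have "(\<Sum>k<length u. ?t k) \<ge> Phi X a u (length y)"
    unfolding Phi_def
  proof (rule sum_mono)
    fix k assume k: "k \<in> {..<length u}"
    hence "\<not> inL X (drop k ?x)" using bad by simp
    thus "(if inL X (drop k u) then a (length u - k + length y) else a (jw X (drop k u))) \<le> ?t k"
      using term_le[of X a k u y, OF assms(1) anti] k by simp
  qed
  moreover have "(\<Sum>k\<in>{length u..<length ?x}. ?t k) \<ge> real (length y) * a (q + length y)"
  proof -
    have "(\<Sum>k\<in>{length u..<length ?x}. ?t k) \<ge> (\<Sum>k\<in>{length u..<length ?x}. a (q + length y))"
    proof (rule sum_mono)
      fix k assume k: "k \<in> {length u..<length ?x}"
      have "jw X (drop k ?x) \<le> length ?x - k" using jw_props(1)[OF assms(1), of "drop k ?x"] by simp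
      also have "\<dots> \<le> q + length y" using k by auto
      finally have 1: "a (q + length y) \<le> a (jw X (drop k ?x))" by (rule am)
      have "length ?x - k + q \<le> q + length y" using k by auto
      hence 2: "a (q + length y) \<le> a (length ?x - k + q)" by (rule am)
      show "a (q + length y) \<le> ?t k" using 1 2 by simp
    qed
    thus ?thesis by simp
  qed
  ultimately show ?thesis by linarith
qed

lemma lists_fin: "finite {x::'a::finite list. length x = n}"
  using finite_lists_length_eq[of "UNIV::'a set" n] by simp

lemma sum_split_bound:
  fixes f :: "'a::finite list \<Rightarrow> real" and s :: "'a list \<Rightarrow> nat"
    and g :: "nat \<Rightarrow> 'a list \<Rightarrow> real" and Y :: "nat \<Rightarrow> 'a list set"
  assumes S: "finite S" and Yf: "\<And>l. finite (Y l)" and g0: "\<And>l u. 0 \<le> g l u"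
    and H: "\<And>x. length x = m \<Longrightarrow> s x \<in> S \<and> s x \<le> m \<and> drop (m - s x) x \<in> Y (s x)
                 \<and> f x \<le> g (s x) (take (m - s x) x)"
  shows "(\<Sum>x\<in>{x. length x = m}. f x) \<le> (\<Sum>l\<in>S. real (card (Y l)) * (\<Sum>u\<in>{u. length u = m - l}. g l u))"
proof -
  let ?A = "{x::'a list. length x = m}"
  have "(\<Sum>x\<in>?A. f x) \<le> (\<Sum>x\<in>?A. g (s x) (take (m - s x) x))"
    by (rule sum_mono) (use H in auto)
  also have "\<dots> = (\<Sum>l\<in>S. \<Sum>x\<in>{x. x \<in> ?A \<and> s x = l}. g (s x) (take (m - s x) x))"
    by (rule sum.group[symmetric]) (use lists_fin S H in auto)
  also have "\<dots> \<le> (\<Sum>l\<in>S. real (card (Y l)) * (\<Sum>u\<in>{u. length u = m - l}. g l u))"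
  proof (rule sum_mono)
    fix l assume "l \<in> S"
    let ?B = "{x. x \<in> ?A \<and> s x = l}"
    let ?t = "\<lambda>x::'a list. (take (m - l) x, drop (m - l) x)"
    have inj: "inj_on ?t ?B"
    proof (rule inj_onI)
      fix x y assume "?t x = ?t y"
      hence "take (m - l) x @ drop (m - l) x = take (m - l) y @ drop (m - l) y" by simp
      thus "x = y" by simp
    qed
    have "(\<Sum>x\<in>?B. g (s x) (take (m - s x) x)) = (\<Sum>x\<in>?B. ((\<lambda>p. g l (fst p)) \<circ> ?t) x)"
      by (rule sum.cong) auto
    also have "\<dots> = (\<Sum>p\<in>?t ` ?B. g l (fst p))"
      by (rule sum.reindex[symmetric]) (rule inj)
    also have "\<dots> \<le> (\<Sum>p\<in>{u. length u = m - l} \<times> Y l. g l (fst p))"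
    proof (rule sum_mono2)
      show "finite ({u::'a list. length u = m - l} \<times> Y l)" by (rule finite_cartesian_product[OF lists_fin Yf])
      show "?t ` ?B \<subseteq> {u::'a list. length u = m - l} \<times> Y l"
      proof
        fix p assume "p \<in> ?t ` ?B"
        then obtain x where x: "x \<in> ?B" "p = ?t x" by (rule imageE)
        have "s x \<le> m" "drop (m - s x) x \<in> Y (s x)" using H x(1) by auto
        thus "p \<in> {u::'a list. length u = m - l} \<times> Y l" using x by auto
      qed
      show "\<And>b. b \<in> {u::'a list. length u = m - l} \<times> Y l - ?t ` ?B \<Longrightarrow> 0 \<le> g l (fst b)" using g0 by simp
    qed
    also have "\<dots> = (\<Sum>u\<in>{u. length u = m - l}. \<Sum>v\<in>Y l. g l u)"
      by (subst sum.cartesian_product) (simp add: case_prod_beta)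
    also have "\<dots> = real (card (Y l)) * (\<Sum>u\<in>{u. length u = m - l}. g l u)"
      by (simp add: sum_distrib_left mult.commute)
    finally show "(\<Sum>x\<in>?B. g (s x) (take (m - s x) x)) \<le> real (card (Y l)) * (\<Sum>u\<in>{u. length u = m - l}. g l u)" .
  qed
  finally show ?thesis .
qed

lemma telescope_step:
  fixes x :: real assumes "x \<ge> 0"
  shows "1 / ((x + 1) * (x + 1 + 1)) + (1 - 1 / (x + 1)) = 1 - 1 / (x + 1 + 1)"
proof -
  have a: "x + 1 \<noteq> 0" "x + 1 + 1 \<noteq> 0" using assms by linarith+
  have "1 / (x + 1) - 1 / (x + 1 + 1) = (1 * (x + 1 + 1) - 1 * (x + 1)) / ((x + 1) * (x + 1 + 1))"
    by (rule diff_frac_eq[OF a])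
  also have "\<dots> = 1 / ((x + 1) * (x + 1 + 1))" by simp
  finally show ?thesis by linarith
qed

lemma sum_telescope_inv: "(\<Sum>l\<in>{1..m}. 1 / (real l * (real l + 1))) = 1 - 1 / (real m + 1)"
proof (induction m)
  case 0 then show ?case by simp
next
  case (Suc m)
  have "{1..Suc m} = insert (Suc m) {1..m}" by auto
  hence "(\<Sum>l\<in>{1..Suc m}. 1 / (real l * (real l + 1))) = 1 / (real (Suc m) * (real (Suc m) + 1)) + (\<Sum>l\<in>{1..m}. 1 / (real l * (real l + 1)))"
    by simp
  also have "\<dots> = 1 / ((real m + 1) * (real m + 1 + 1)) + (1 - 1 / (real m + 1))" using Suc.IH by simp
  also have "\<dots> = 1 - 1 / (real m + 1 + 1)" by (rule telescope_step) simp
  finally show ?case by simp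
qed

definition Gs :: "(nat \<Rightarrow> 'a) set \<Rightarrow> 'a list \<Rightarrow> nat" where
  "Gs X x = (GREATEST s. s \<le> length x \<and> inL X (drop (length x - s) x))"

lemma Gs_props:
  assumes "X \<noteq> {}"
  shows "Gs X x \<le> length x" "inL X (drop (length x - Gs X x) x)"
    "\<And>k. k < length x \<Longrightarrow> inL X (drop k x) \<Longrightarrow> length x - k \<le> Gs X x"
proof -
  let ?P = "\<lambda>s. s \<le> length x \<and> inL X (drop (length x - s) x)"
  have P0: "?P 0" using inL_Nil[OF assms] by simp
  have B: "\<And>y. ?P y \<Longrightarrow> y \<le> length x" by simp
  have "?P (Gs X x)" unfolding Gs_def by (rule GreatestI_nat[where P="?P", OF P0 B])
  thus "Gs X x \<le> length x" "inL X (drop (length x - Gs X x) x)" by auto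
  fix k assume "k < length x" "inL X (drop k x)"
  hence "?P (length x - k)" by (simp add: diff_diff_cancel)
  thus "length x - k \<le> Gs X x" unfolding Gs_def by (rule Greatest_le_nat[where P="?P", OF _ B])
qed

locale setting =
  fixes X :: "(nat \<Rightarrow> 'a::finite) set" and a :: "nat \<Rightarrow> real" and C :: real and d :: nat
  assumes ne: "X \<noteq> {}" and sh: "shift ` X \<subseteq> X"
    and anti: "\<And>j. a (Suc j) \<le> a j"
    and alow: "\<And>j. j \<ge> 1 \<Longrightarrow> a j \<ge> ln (real j)^2 / real j"
    and poly: "\<And>n. n \<ge> 1 \<Longrightarrow> real (card {w. length w = n \<and> inL X w}) \<le> C * real n ^ d"
begin

lemma am: "i \<le> j \<Longrightarrow> a j \<le> a i"
  using lift_Suc_antimono_le[of a] anti by blast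

lemma a_nonneg: "a j \<ge> 0"
proof -
  have "a (Suc j) \<ge> ln (real (Suc j))^2 / real (Suc j)" by (rule alow) simp
  moreover have "ln (real (Suc j))^2 / real (Suc j) \<ge> 0" by simp
  moreover have "a (Suc j) \<le> a j" by (rule anti)
  ultimately show ?thesis by linarith
qed

lemma a_pos: "a j > 0"
proof -
  have "a (j + 2) \<ge> ln (real (j + 2))^2 / real (j + 2)" by (rule alow) simp
  moreover have "ln (real (j + 2)) > 0" by simp
  hence "ln (real (j + 2))^2 / real (j + 2) > 0" by simp
  moreover have "a (j + 2) \<le> a j" by (rule am) simp
  ultimately show ?thesis by linarith
qed

lemma a_lower:
  assumes "m \<ge> 1"
  shows "a m \<ge> ln (real m + 1)^2 / (4 * (real m + 1))"
proof (cases "m = 1")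
  case True
  have "a 2 \<ge> ln (real (2::nat))^2 / real (2::nat)" by (rule alow) simp
  moreover have "a 2 \<le> a 1" by (rule am) simp
  ultimately have "ln (2::real)^2 / 2 \<le> a 1" by simp
  moreover have "ln (2::real)^2 / (4 * 2) \<le> ln 2 ^2 / 2" by (simp add: divide_left_mono)
  ultimately have "ln (2::real)^2 / (4 * 2) \<le> a 1" by linarith
  thus ?thesis using True by simp
next
  case False
  hence m2: "m \<ge> 2" using assms by simp
  have "real m + 1 \<le> real m * real m"
  proof -
    have "real m * real m \<ge> 2 * real m" using m2 by (intro mult_right_mono) auto
    thus ?thesis using m2 by linarith
  qed
  hence "ln (real m + 1) \<le> ln (real m * real m)" using m2 by (subst ln_le_cancel_iff) auto
  also have "\<dots> = 2 * ln (real m)" using m2 by (simp add: ln_mult)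
  finally have l1: "ln (real m + 1) \<le> 2 * ln (real m)" .
  have l0: "ln (real m + 1) \<ge> 0" by simp
  have "ln (real m + 1)^2 \<le> (2 * ln (real m))^2" using l1 l0 by (rule power_mono)
  hence l2: "ln (real m + 1)^2 \<le> 4 * ln (real m)^2" by (simp add: power_mult_distrib)
  have "ln (real m + 1)^2 / (4 * (real m + 1)) \<le> 4 * ln (real m)^2 / (4 * (real m + 1))"
    using l2 by (intro divide_right_mono) auto
  also have "\<dots> = ln (real m)^2 / (real m + 1)" by (rule mult_divide_mult_cancel_left) simp
  also have "\<dots> \<le> ln (real m)^2 / real m" using m2 by (intro divide_left_mono) auto
  also have "\<dots> \<le> a m" by (rule alow[OF assms])
  finally show ?thesis .
qed

definition "Cy = C + real CARD('a)"
definition "K = ln Cy / ln 2 + real d + 2"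
definition "\<gamma> = K / ln 2"
definition "\<beta> = 64 * \<gamma>"
definition "V q = \<gamma> * ln (real q + 1)^2"

lemma C_nonneg: "C \<ge> 0"
proof -
  obtain x where "x \<in> X" using ne by blast
  hence "inL X [x 0]" unfolding inL_def by auto
  hence "{[x 0]} \<subseteq> {w. length w = 1 \<and> inL X w}" by auto
  hence "card {[x 0]} \<le> card {w::'a list. length w = 1 \<and> inL X w}"
    by (intro card_mono) (auto intro: finite_subset[OF _ lists_fin[of 1]])
  hence "1 \<le> real (card {w. length w = 1 \<and> inL X w})" by simp
  also have "\<dots> \<le> C * real 1 ^ d" by (rule poly) simp
  finally show ?thesis by simp
qed

lemma Cy_ge1: "Cy \<ge> 1"
proof -
  have "real CARD('a) \<ge> 1" by (simp add: Suc_le_eq)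
  thus ?thesis unfolding Cy_def using C_nonneg by linarith
qed

lemma K_nonneg: "K \<ge> 0" unfolding K_def using Cy_ge1 by simp
lemma gamma_nonneg: "\<gamma> \<ge> 0" unfolding \<gamma>_def using K_nonneg by simp
lemma beta_nonneg: "\<beta> \<ge> 0" unfolding \<beta>_def using gamma_nonneg by simp
lemma V_nonneg: "V q \<ge> 0" unfolding V_def using gamma_nonneg by simp
lemma V_mono: "l \<le> n \<Longrightarrow> V l \<le> V n"
proof -
  assume "l \<le> n"
  hence "ln (real l + 1) \<le> ln (real n + 1)" by (subst ln_le_cancel_iff) auto
  hence "ln (real l + 1)^2 \<le> ln (real n + 1)^2" by (intro power_mono) auto
  thus ?thesis unfolding V_def using gamma_nonneg by (intro mult_left_mono)
qed

lemma cardL: "real (card {w::'a list. length w = l \<and> inL X w}) \<le> Cy * (real l + 1)^d"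
proof (cases "l = 0")
  case True
  have "{w::'a list. length w = l \<and> inL X w} = {[]}" using True inL_Nil[OF ne] by auto
  thus ?thesis using Cy_ge1 True by simp
next
  case False
  have "real (card {w::'a list. length w = l \<and> inL X w}) \<le> C * real l ^ d" by (rule poly) (use False in simp)
  also have "\<dots> \<le> C * (real l + 1) ^ d" using C_nonneg by (intro mult_left_mono power_mono) auto
  also have "\<dots> \<le> Cy * (real l + 1) ^ d" unfolding Cy_def by (intro mult_right_mono) auto
  finally show ?thesis .
qed

lemma cardY: "l \<ge> 1 \<Longrightarrow> real (card {y::'a list. length y = l \<and> (inL X y \<or> l = 1)}) \<le> Cy * (real l + 1)^d"
proof (cases "l = 1")
  case True
  have "{y::'a list. length y = l \<and> (inL X y \<or> l = 1)} = {y. set y \<subseteq> UNIV \<and> length y = 1}" using True by auto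
  hence "card {y::'a list. length y = l \<and> (inL X y \<or> l = 1)} = CARD('a)"
    using card_lists_length_eq[of "UNIV::'a set" 1] by simp
  moreover have "real CARD('a) \<le> Cy" unfolding Cy_def using C_nonneg by simp
  moreover have "Cy \<le> Cy * (real l + 1)^d" using Cy_ge1 by simp
  ultimately show ?thesis by simp
next
  case False
  hence "{y::'a list. length y = l \<and> (inL X y \<or> l = 1)} = {y. length y = l \<and> inL X y}" by auto
  thus ?thesis using cardL by simp
qed

lemma step_ineq:
  assumes "l \<ge> 1"
  shows "Cy * (real l + 1)^d * exp (- \<beta> * real l * a (q + l)) * exp (V l) \<le> exp (V q) * (1 / (real l * (real l + 1)))"
proof -
  let ?A = "a (q + l)"
  have A: "?A \<ge> ln (real (q + l) + 1) ^ 2 / (4 * (real (q + l) + 1))"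
    by (rule a_lower) (use assms in simp)
  have ki: "ln Cy + real d * ln (real l + 1) + ln (real l) + ln (real l + 1)
          + \<gamma> * ln (real l + 1) ^ 2 - \<gamma> * ln (real q + 1) ^ 2 \<le> \<beta> * real l * ?A"
    by (rule key_ineq[OF Cy_ge1 assms K_def \<gamma>_def \<beta>_def A])
  define E where "E = ln Cy + real d * ln (real l + 1) + ln (real l) + ln (real l + 1)"
  have lpos: "real l > 0" using assms by simp
  have expE: "exp E = Cy * (real l + 1)^d * (real l * (real l + 1))"
  proof -
    have "exp E = exp (ln Cy) * exp (real d * ln (real l + 1)) * exp (ln (real l)) * exp (ln (real l + 1))"
      unfolding E_def by (simp add: exp_add)
    also have "\<dots> = Cy * (real l + 1)^d * real l * (real l + 1)"
      using Cy_ge1 lpos by (simp add: exp_of_nat_mult)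
    finally show ?thesis by simp
  qed
  have "E + V l - V q \<le> \<beta> * real l * ?A" using ki unfolding E_def V_def by simp
  hence "exp (E + V l - V q) \<le> exp (\<beta> * real l * ?A)" by simp
  hence "exp E * exp (V l) \<le> exp (\<beta> * real l * ?A) * exp (V q)"
    by (simp add: exp_diff exp_add divide_le_eq)
  hence *: "Cy * (real l + 1)^d * exp (V l) * (real l * (real l + 1)) \<le> exp (\<beta> * real l * ?A) * exp (V q)"
    unfolding expE by (simp add: algebra_simps)
  have pp: "real l * (real l + 1) > 0" using lpos by simp
  have "Cy * (real l + 1)^d * exp (V l) \<le> exp (\<beta> * real l * ?A) * exp (V q) / (real l * (real l + 1))"
    using * pp by (simp add: le_divide_eq)
  hence "Cy * (real l + 1)^d * exp (V l) * exp (- \<beta> * real l * ?A) \<le>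
         exp (\<beta> * real l * ?A) * exp (V q) / (real l * (real l + 1)) * exp (- \<beta> * real l * ?A)"
    by (intro mult_right_mono) auto
  also have "\<dots> = exp (V q) * (1 / (real l * (real l + 1)))"
    by (simp add: exp_minus field_simps)
  finally show ?thesis by (simp add: algebra_simps)
qed

end

context setting
begin

lemma cp_nonneg: "cp X a v \<ge> 0"
  unfolding cp_def using a_nonneg by simp

lemma rec_bound: "(\<Sum>x\<in>{x::'a list. length x = m}. exp (- \<beta> * Phi X a x q)) \<le> exp (V q)"
proof (induction m arbitrary: q rule: less_induct)
  case (less m)
  show ?case
  proof (cases "m = 0")
    case True
    have "{x::'a list. length x = m} = {[]}" using True by auto
    moreover have "Phi X a [] q = 0" unfolding Phi_def by simp
    ultimately show ?thesis using V_nonneg by simp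
  next
    case False
    define s where "s x = max 1 (Gs X x)" for x :: "'a list"
    define Y where "Y l = {y::'a list. length y = l \<and> (inL X y \<or> l = 1)}" for l
    define g where "g l u = exp (- \<beta> * (Phi X a u l + real l * a (q + l)))" for l u
    have "(\<Sum>x\<in>{x::'a list. length x = m}. exp (- \<beta> * Phi X a x q))
        \<le> (\<Sum>l\<in>{1..m}. real (card (Y l)) * (\<Sum>u\<in>{u. length u = m - l}. g l u))"
    proof (rule sum_split_bound)
      show "finite {1..m}" by simp
      show "\<And>l. finite (Y l)" unfolding Y_def by (rule finite_subset[OF _ lists_fin]) auto
      show "\<And>l u. 0 \<le> g l u" unfolding g_def by simp
      fix x :: "'a list" assume lx: "length x = m"
      have G: "Gs X x \<le> m" "inL X (drop (m - Gs X x) x)"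
        "\<And>k. k < m \<Longrightarrow> inL X (drop k x) \<Longrightarrow> m - k \<le> Gs X x"
        using Gs_props[OF ne, where x=x] lx by auto
      have s1: "s x \<in> {1..m}" "s x \<le> m" unfolding s_def using G(1) False by auto
      have sY: "drop (m - s x) x \<in> Y (s x)"
      proof -
        have "length (drop (m - s x) x) = s x" using lx s1 by simp
        moreover have "inL X (drop (m - s x) x) \<or> s x = 1"
        proof (cases "Gs X x \<ge> 1")
          case True
          hence "s x = Gs X x" unfolding s_def by simp
          thus ?thesis using G(2) by simp
        next
          case False
          thus ?thesis unfolding s_def by simp
        qed
        ultimately show ?thesis unfolding Y_def by simp
      qed
      let ?u = "take (m - s x) x" and ?y = "drop (m - s x) x"
      have bad: "\<And>k. k < length ?u \<Longrightarrow> \<not> inL X (drop k (?u @ ?y))"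
      proof
        fix k assume k: "k < length ?u" and i: "inL X (drop k (?u @ ?y))"
        have "k < m - s x" using k lx by simp
        moreover have "m - k \<le> Gs X x" using G(3)[of k] i k lx by simp
        ultimately show False unfolding s_def by simp
      qed
      have "Phi X a (?u @ ?y) q \<ge> Phi X a ?u (length ?y) + real (length ?y) * a (q + length ?y)"
        by (rule Phi_split[where X=X and a=a and u="?u" and y="?y", OF ne anti bad])
      moreover have "length ?y = s x" using lx s1 by simp
      ultimately have "Phi X a x q \<ge> Phi X a ?u (s x) + real (s x) * a (q + s x)" by simp
      hence "exp (- \<beta> * Phi X a x q) \<le> g (s x) ?u"
        unfolding g_def using beta_nonneg by (simp add: mult_left_mono)
      thus "s x \<in> {1..m} \<and> s x \<le> m \<and> drop (m - s x) x \<in> Y (s x) \<and> exp (- \<beta> * Phi X a x q) \<le> g (s x) (take (m - s x) x)"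
        using s1 sY by simp
    qed
    also have "\<dots> \<le> (\<Sum>l\<in>{1..m}. exp (V q) * (1 / (real l * (real l + 1))))"
    proof (rule sum_mono)
      fix l assume l: "l \<in> {1..m}"
      have "(\<Sum>u\<in>{u::'a list. length u = m - l}. g l u)
          = exp (- \<beta> * real l * a (q + l)) * (\<Sum>u\<in>{u::'a list. length u = m - l}. exp (- \<beta> * Phi X a u l))"
        unfolding g_def by (simp add: sum_distrib_left exp_add[symmetric] algebra_simps)
      also have "\<dots> \<le> exp (- \<beta> * real l * a (q + l)) * exp (V l)"
        using less[of "m - l" l] l False by (intro mult_left_mono) auto
      finally have 1: "(\<Sum>u\<in>{u::'a list. length u = m - l}. g l u) \<le> exp (- \<beta> * real l * a (q + l)) * exp (V l)" .
      have "real (card (Y l)) * (\<Sum>u\<in>{u. length u = m - l}. g l u)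
          \<le> Cy * (real l + 1)^d * (exp (- \<beta> * real l * a (q + l)) * exp (V l))"
        using cardY[of l] l 1 unfolding Y_def
        by (intro mult_mono) (auto intro: sum_nonneg simp: g_def)
      also have "\<dots> \<le> exp (V q) * (1 / (real l * (real l + 1)))"
        using step_ineq[of l q] l by (simp add: algebra_simps)
      finally show "real (card (Y l)) * (\<Sum>u\<in>{u. length u = m - l}. g l u) \<le> exp (V q) * (1 / (real l * (real l + 1)))" .
    qed
    also have "\<dots> = exp (V q) * (1 - 1 / (real m + 1))"
      by (subst sum_distrib_left[symmetric]) (simp only: sum_telescope_inv)
    also have "\<dots> \<le> exp (V q)" by (simp add: mult_left_le)
    finally show ?thesis .
  qed
qed

lemma cost_ge_Phi:
  assumes bad: "\<And>k. k < length u \<Longrightarrow> \<not> inL X (drop k (u @ y))"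
  shows "cost X a (u @ y) \<ge> Phi X a u (length y)"
proof -
  let ?x = "u @ y"
  have split: "{..<length ?x} = {..<length u} \<union> {length u..<length ?x}" by auto
  have "cost X a ?x = (\<Sum>k<length u. cp X a (drop k ?x)) + (\<Sum>k\<in>{length u..<length ?x}. cp X a (drop k ?x))"
    unfolding cost_def split by (rule sum.union_disjoint) auto
  moreover have "(\<Sum>k\<in>{length u..<length ?x}. cp X a (drop k ?x)) \<ge> 0"
    by (rule sum_nonneg) (rule cp_nonneg)
  moreover have "(\<Sum>k<length u. cp X a (drop k ?x)) \<ge> Phi X a u (length y)"
    unfolding Phi_def
  proof (rule sum_mono)
    fix k assume k: "k \<in> {..<length u}"
    hence nb: "\<not> inL X (drop k ?x)" using bad by simp
    have "(if inL X (drop k u) then a (length u - k + length y) else a (jw X (drop k u))) \<le> a (jw X (drop k ?x))"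
      using term_le[of X a k u y, OF ne anti] k nb by simp
    thus "(if inL X (drop k u) then a (length u - k + length y) else a (jw X (drop k u))) \<le> cp X a (drop k ?x)"
      unfolding cp_def using nb by simp
  qed
  ultimately show ?thesis by linarith
qed

lemma Z_bound:
  "(\<Sum>w\<in>{w::'a list. length w = n}. exp (- \<beta> * cost X a w)) \<le> (real n + 1) * (Cy * (real n + 1)^d * exp (V n))"
proof -
  define Y where "Y l = {y::'a list. length y = l \<and> inL X y}" for l
  define g where "g l u = exp (- \<beta> * Phi X a u l)" for l u
  have "(\<Sum>w\<in>{w::'a list. length w = n}. exp (- \<beta> * cost X a w))
      \<le> (\<Sum>l\<in>{0..n}. real (card (Y l)) * (\<Sum>u\<in>{u. length u = n - l}. g l u))"
  proof (rule sum_split_bound[where s="Gs X"])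
    show "finite {0..n}" by simp
    show "\<And>l. finite (Y l)" unfolding Y_def by (rule finite_subset[OF _ lists_fin]) auto
    show "\<And>l u. 0 \<le> g l u" unfolding g_def by simp
    fix x :: "'a list" assume lx: "length x = n"
    have G: "Gs X x \<le> n" "inL X (drop (n - Gs X x) x)"
      "\<And>k. k < n \<Longrightarrow> inL X (drop k x) \<Longrightarrow> n - k \<le> Gs X x"
      using Gs_props[OF ne, where x=x] lx by auto
    let ?u = "take (n - Gs X x) x" and ?y = "drop (n - Gs X x) x"
    have bad: "\<And>k. k < length ?u \<Longrightarrow> \<not> inL X (drop k (?u @ ?y))"
    proof
      fix k assume k: "k < length ?u" and i: "inL X (drop k (?u @ ?y))"
      have "k < n - Gs X x" using k lx by simp
      moreover have "n - k \<le> Gs X x" using G(3)[of k] i k lx by simp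
      ultimately show False by simp
    qed
    have "cost X a (?u @ ?y) \<ge> Phi X a ?u (length ?y)" by (rule cost_ge_Phi[OF bad])
    moreover have "length ?y = Gs X x" using lx G(1) by simp
    ultimately have "cost X a x \<ge> Phi X a ?u (Gs X x)" by simp
    hence "exp (- \<beta> * cost X a x) \<le> g (Gs X x) ?u"
      unfolding g_def using beta_nonneg by (simp add: mult_left_mono)
    moreover have "?y \<in> Y (Gs X x)" unfolding Y_def using G lx by simp
    ultimately show "Gs X x \<in> {0..n} \<and> Gs X x \<le> n \<and> drop (n - Gs X x) x \<in> Y (Gs X x) \<and> exp (- \<beta> * cost X a x) \<le> g (Gs X x) (take (n - Gs X x) x)"
      using G(1) by simp
  qed
  also have "\<dots> \<le> (\<Sum>l\<in>{0..n}. Cy * (real n + 1)^d * exp (V n))"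
  proof (rule sum_mono)
    fix l assume l: "l \<in> {0..n}"
    have 1: "(\<Sum>u\<in>{u::'a list. length u = n - l}. g l u) \<le> exp (V l)"
      unfolding g_def by (rule rec_bound)
    have "real (card (Y l)) * (\<Sum>u\<in>{u. length u = n - l}. g l u) \<le> Cy * (real l + 1)^d * exp (V l)"
      using cardL[of l] 1 unfolding Y_def
      by (intro mult_mono) (auto intro: sum_nonneg simp: g_def)
    also have "\<dots> \<le> Cy * (real n + 1)^d * exp (V n)"
      using l Cy_ge1 V_mono[of l n] by (intro mult_mono power_mono) auto
    finally show "real (card (Y l)) * (\<Sum>u\<in>{u. length u = n - l}. g l u) \<le> Cy * (real n + 1)^d * exp (V n)" .
  qed
  also have "\<dots> = (real n + 1) * (Cy * (real n + 1)^d * exp (V n))" by simp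
  finally show ?thesis .
qed

end

definition pre :: "nat \<Rightarrow> (nat \<Rightarrow> 'a) \<Rightarrow> 'a list" where
  "pre n x = map x [0..<n]"

lemma length_pre[simp]: "length (pre n x) = n" unfolding pre_def by simp

lemma cyl_eq: "length w = n \<Longrightarrow> cyl w = pre n -` {w}"
proof
  assume "length w = n"
  show "cyl w \<subseteq> pre n -` {w}"
  proof
    fix x assume "x \<in> cyl w"
    hence "\<forall>i<length w. x i = w ! i" unfolding cyl_def by simp
    hence "map x [0..<n] = w" using \<open>length w = n\<close> by (intro nth_equalityI) auto
    thus "x \<in> pre n -` {w}" unfolding pre_def by simp
  qed
  show "pre n -` {w} \<subseteq> cyl w"
  proof
    fix x assume "x \<in> pre n -` {w}"
    hence "map x [0..<n] = w" unfolding pre_def by simp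
    hence "\<forall>i<length w. x i = w ! i" using \<open>length w = n\<close> by auto
    thus "x \<in> cyl w" unfolding cyl_def by simp
  qed
qed
lemma space_shift: "space shift_space = UNIV"
  unfolding shift_space_def by (simp add: space_PiM)
lemma mem_cyl_pre: "x \<in> cyl w \<longleftrightarrow> pre (length w) x = w"
  using cyl_eq[of w "length w"] by auto

lemma comp_sets: "{x. x i = c} \<in> sets shift_space"
proof -
  have "(\<lambda>x. x i) \<in> measurable shift_space (count_space UNIV)"
    unfolding shift_space_def by (rule measurable_component_singleton) simp
  hence "(\<lambda>x. x i) -` {c} \<inter> space shift_space \<in> sets shift_space"
    by (rule measurable_sets) simp
  thus ?thesis by (simp add: space_shift vimage_def)
qed

lemma cyl_sets: "cyl w \<in> sets shift_space"
proof (induction w rule: rev_induct)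
  case Nil
  have "cyl [] = space shift_space" unfolding cyl_def space_shift by simp
  thus ?case by (metis sets.top)
next
  case (snoc c w)
  have "cyl (w @ [c]) = cyl w \<inter> {x. x (length w) = c}"
    unfolding cyl_def by (auto simp: nth_append less_Suc_eq)
  moreover have "cyl w \<inter> {x. x (length w) = c} \<in> sets shift_space" by (rule sets.Int[OF snoc comp_sets])
  ultimately show ?case by simp
qed

lemma pre_meas: "(pre n :: (nat \<Rightarrow> 'a::finite) \<Rightarrow> 'a list) \<in> shift_space \<rightarrow>\<^sub>M count_space UNIV"
proof (subst measurable_count_space_eq2_countable, intro conjI ballI)
  show "pre n \<in> space shift_space \<rightarrow> UNIV" by simp
  fix w :: "'a list"
  show "(pre n :: (nat \<Rightarrow> 'a::finite) \<Rightarrow> 'a list) -` {w} \<inter> space shift_space \<in> sets shift_space"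
  proof (cases "length w = n")
    case True
    thus ?thesis using cyl_eq[OF True] cyl_sets[of w] by (simp add: space_shift)
  next
    case False
    hence "pre n -` {w} = {}" by auto
    thus ?thesis by simp
  qed
qed

lemma pre_set_sets: "{x::nat \<Rightarrow> 'a::finite. P (pre n x)} \<in> sets shift_space"
proof -
  have "pre n -` {w. P w} \<inter> space shift_space \<in> sets shift_space"
    by (rule measurable_sets[OF pre_meas]) simp
  thus ?thesis by (simp add: space_shift vimage_def)
qed

lemma pre_fun_meas: "(\<lambda>x::nat \<Rightarrow> 'a::finite. f (pre n x)) \<in> borel_measurable shift_space"
  using measurable_compose[OF pre_meas, of f borel] by (simp add: o_def)



lemma sum_lists_Suc:
  "(\<Sum>u\<in>{u::'a::finite list. length u = Suc m}. f u) = (\<Sum>c\<in>UNIV. \<Sum>u\<in>{u. length u = m}. f (c # u))"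
proof -
  let ?h = "\<lambda>p::'a \<times> 'a list. fst p # snd p"
  have e: "{u::'a list. length u = Suc m} = ?h ` (UNIV \<times> {u. length u = m})"
  proof
    show "{u::'a list. length u = Suc m} \<subseteq> ?h ` (UNIV \<times> {u. length u = m})"
    proof
      fix u :: "'a list" assume "u \<in> {u. length u = Suc m}"
      then obtain c u' where cu: "u = c # u'" "length u' = m" by (cases u) auto
      show "u \<in> ?h ` (UNIV \<times> {u. length u = m})"
        by (rule image_eqI[where x="(c, u')"]) (use cu in simp_all)
    qed
    show "?h ` (UNIV \<times> {u. length u = m}) \<subseteq> {u::'a list. length u = Suc m}"
      by (rule image_subsetI) (simp add: mem_Times_iff)
  qed
  have inj: "inj_on ?h (UNIV \<times> {u::'a list. length u = m})"
  proof (rule inj_onI)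
    fix p q :: "'a \<times> 'a list" assume "?h p = ?h q"
    thus "p = q" by (simp add: prod_eq_iff)
  qed
  have "(\<Sum>u\<in>{u::'a list. length u = Suc m}. f u) = (\<Sum>p\<in>UNIV \<times> {u. length u = m}. f (?h p))"
    unfolding e by (subst sum.reindex[OF inj]) (simp add: o_def)
  also have "\<dots> = (\<Sum>p\<in>UNIV \<times> {u. length u = m}. case p of (c, u) \<Rightarrow> f (c # u))"
    by (simp add: case_prod_beta)
  also have "\<dots> = (\<Sum>c\<in>UNIV. \<Sum>u\<in>{u. length u = m}. f (c # u))"
    by (rule sum.cartesian_product[symmetric])
  finally show ?thesis .
qed

lemma sum_lists_append:
  "(\<Sum>w\<in>{w::'a::finite list. length w = m + n}. f w) = (\<Sum>u\<in>{u. length u = m}. \<Sum>v\<in>{v. length v = n}. f (u @ v))"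
proof -
  let ?h = "\<lambda>p::'a list \<times> 'a list. fst p @ snd p"
  have e: "{w::'a list. length w = m + n} = ?h ` ({u. length u = m} \<times> {v. length v = n})"
  proof
    show "{w::'a list. length w = m + n} \<subseteq> ?h ` ({u. length u = m} \<times> {v. length v = n})"
    proof
      fix w :: "'a list" assume w: "w \<in> {w. length w = m + n}"
      show "w \<in> ?h ` ({u. length u = m} \<times> {v. length v = n})"
        by (rule image_eqI[where x="(take m w, drop m w)"]) (use w in simp_all)
    qed
    show "?h ` ({u. length u = m} \<times> {v. length v = n}) \<subseteq> {w::'a list. length w = m + n}"
      by (rule image_subsetI) (simp add: mem_Times_iff)
  qed
  have inj: "inj_on ?h ({u::'a list. length u = m} \<times> {v. length v = n})"
  proof (rule inj_onI)
    fix p q :: "'a list \<times> 'a list"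
    assume p: "p \<in> {u::'a list. length u = m} \<times> {v. length v = n}" and q: "q \<in> {u::'a list. length u = m} \<times> {v. length v = n}"
      and h: "?h p = ?h q"
    have "length (fst p) = length (fst q)" using p q by (simp add: mem_Times_iff)
    hence "fst p = fst q \<and> snd p = snd q" using h by simp
    thus "p = q" by (simp add: prod_eq_iff)
  qed
  have "(\<Sum>w\<in>{w::'a list. length w = m + n}. f w) = (\<Sum>p\<in>{u::'a list. length u = m} \<times> {v. length v = n}. f (?h p))"
    unfolding e by (subst sum.reindex[OF inj]) (simp add: o_def)
  also have "\<dots> = (\<Sum>p\<in>{u::'a list. length u = m} \<times> {v. length v = n}. case p of (u, v) \<Rightarrow> f (u @ v))"
    by (simp add: case_prod_beta)
  also have "\<dots> = (\<Sum>u\<in>{u. length u = m}. \<Sum>v\<in>{v. length v = n}. f (u @ v))"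
    by (rule sum.cartesian_product[symmetric])
  finally show ?thesis .
qed

lemma joint_entropy:
  fixes p :: "'u \<Rightarrow> 'v \<Rightarrow> real"
  assumes U: "finite U" and V: "finite V" and p0: "\<And>u v. u \<in> U \<Longrightarrow> v \<in> V \<Longrightarrow> p u v \<ge> 0"
    and tot: "(\<Sum>u\<in>U. \<Sum>v\<in>V. p u v) = 1"
  shows "(\<Sum>u\<in>U. \<Sum>v\<in>V. - p u v * ln (p u v))
     \<le> (\<Sum>u\<in>U. - (\<Sum>v\<in>V. p u v) * ln (\<Sum>v\<in>V. p u v)) + (\<Sum>v\<in>V. - (\<Sum>u\<in>U. p u v) * ln (\<Sum>u\<in>U. p u v))"
proof -
  define P where "P u = (\<Sum>v\<in>V. p u v)" for u
  define Q where "Q v = (\<Sum>u\<in>U. p u v)" for v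
  have Pge: "p u v \<le> P u" if "u \<in> U" "v \<in> V" for u v
    unfolding P_def using that V p0 by (intro member_le_sum) auto
  have Qge: "p u v \<le> Q v" if "u \<in> U" "v \<in> V" for u v
    unfolding Q_def using that U p0 by (intro member_le_sum) auto
  have P0: "P u \<ge> 0" if "u \<in> U" for u unfolding P_def using that p0 by (intro sum_nonneg) auto
  have Q0: "Q v \<ge> 0" if "v \<in> V" for v unfolding Q_def using that p0 by (intro sum_nonneg) auto
  have tm: "- p u v * ln (p u v) + p u v * ln (P u) + p u v * ln (Q v) \<le> P u * Q v - p u v"
    if uv: "u \<in> U" "v \<in> V" for u v
  proof (cases "p u v = 0")
    case True
    thus ?thesis using P0[OF uv(1)] Q0[OF uv(2)] by simp
  next
    case False
    hence pp: "p u v > 0" using p0[OF uv] by simp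
    have Pp: "P u > 0" using Pge[OF uv] pp by linarith
    have Qp: "Q v > 0" using Qge[OF uv] pp by linarith
    have "ln (P u * Q v / p u v) \<le> P u * Q v / p u v - 1"
      using Pp Qp pp by (intro ln_le_minus_one) simp
    moreover have "ln (P u * Q v / p u v) = ln (P u) + ln (Q v) - ln (p u v)"
      using Pp Qp pp by (simp add: ln_div ln_mult_pos)
    ultimately have "ln (P u) + ln (Q v) - ln (p u v) \<le> P u * Q v / p u v - 1" by simp
    hence "p u v * (ln (P u) + ln (Q v) - ln (p u v)) \<le> p u v * (P u * Q v / p u v - 1)"
      using pp by (intro mult_left_mono) auto
    also have "\<dots> = P u * Q v - p u v" using pp by (simp add: field_simps)
    finally show ?thesis by (simp add: algebra_simps)
  qed
  have "(\<Sum>u\<in>U. \<Sum>v\<in>V. - p u v * ln (p u v) + p u v * ln (P u) + p u v * ln (Q v))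
      \<le> (\<Sum>u\<in>U. \<Sum>v\<in>V. P u * Q v - p u v)"
    by (intro sum_mono tm)
  moreover have "(\<Sum>u\<in>U. \<Sum>v\<in>V. - p u v * ln (p u v) + p u v * ln (P u) + p u v * ln (Q v))
      = (\<Sum>u\<in>U. \<Sum>v\<in>V. - p u v * ln (p u v)) + (\<Sum>u\<in>U. P u * ln (P u)) + (\<Sum>v\<in>V. Q v * ln (Q v))"
  proof -
    have 1: "(\<Sum>u\<in>U. \<Sum>v\<in>V. p u v * ln (P u)) = (\<Sum>u\<in>U. P u * ln (P u))"
      unfolding P_def by (simp add: sum_distrib_right)
    have 2: "(\<Sum>u\<in>U. \<Sum>v\<in>V. p u v * ln (Q v)) = (\<Sum>v\<in>V. Q v * ln (Q v))"
      unfolding Q_def by (subst sum.swap) (simp add: sum_distrib_right)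
    have "(\<Sum>u\<in>U. \<Sum>v\<in>V. - p u v * ln (p u v) + p u v * ln (P u) + p u v * ln (Q v))
      = (\<Sum>u\<in>U. \<Sum>v\<in>V. - p u v * ln (p u v)) + (\<Sum>u\<in>U. \<Sum>v\<in>V. p u v * ln (P u)) + (\<Sum>u\<in>U. \<Sum>v\<in>V. p u v * ln (Q v))"
      by (simp only: sum.distrib)
    thus ?thesis by (simp only: 1 2)
  qed
  moreover have "(\<Sum>u\<in>U. \<Sum>v\<in>V. P u * Q v - p u v) = 0"
  proof -
    have sP: "(\<Sum>u\<in>U. P u) = 1" unfolding P_def using tot by simp
    have sQ: "(\<Sum>v\<in>V. Q v) = 1" unfolding Q_def using tot by (subst sum.swap) simp
    have "(\<Sum>u\<in>U. \<Sum>v\<in>V. P u * Q v - p u v) = (\<Sum>u\<in>U. P u) * (\<Sum>v\<in>V. Q v) - (\<Sum>u\<in>U. \<Sum>v\<in>V. p u v)"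
      by (simp add: sum_subtractf sum_product)
    thus ?thesis using sP sQ tot by simp
  qed
  ultimately show ?thesis unfolding P_def[symmetric] Q_def[symmetric] by (simp add: sum_negf)
qed

lemma gibbs:
  fixes p c :: "'w \<Rightarrow> real" and b :: real
  assumes S: "finite S" and p0: "\<And>w. w \<in> S \<Longrightarrow> p w \<ge> 0" and tot: "(\<Sum>w\<in>S. p w) = 1"
  shows "(\<Sum>w\<in>S. - p w * ln (p w)) \<le> b * (\<Sum>w\<in>S. p w * c w) + ln (\<Sum>w\<in>S. exp (- b * c w))"
proof -
  define Z where "Z = (\<Sum>w\<in>S. exp (- b * c w))"
  have Sne: "S \<noteq> {}" using tot by auto
  have Zp: "Z > 0" unfolding Z_def using S Sne by (intro sum_pos) auto
  have tm: "- p w * ln (p w) - b * (p w * c w) - p w * ln Z \<le> exp (- b * c w) / Z - p w"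
    if w: "w \<in> S" for w
  proof (cases "p w = 0")
    case True thus ?thesis using Zp by simp
  next
    case False
    hence pp: "p w > 0" using p0[OF w] by simp
    define t where "t = exp (- b * c w) / Z"
    have tp: "t > 0" unfolding t_def using Zp by simp
    have "ln (t / p w) \<le> t / p w - 1" using tp pp by (intro ln_le_minus_one) simp
    moreover have "ln (t / p w) = - b * c w - ln Z - ln (p w)"
    proof -
      have "ln (t / p w) = ln t - ln (p w)" using tp pp by (simp add: ln_div)
      moreover have "ln t = - b * c w - ln Z" unfolding t_def using Zp by (simp add: ln_div)
      ultimately show ?thesis by simp
    qed
    ultimately have "p w * (- b * c w - ln Z - ln (p w)) \<le> p w * (t / p w - 1)"
      using pp by (intro mult_left_mono) auto
    also have "\<dots> = t - p w" using pp by (simp add: field_simps)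
    finally show ?thesis unfolding t_def by (simp add: algebra_simps)
  qed
  have "(\<Sum>w\<in>S. - p w * ln (p w) - b * (p w * c w) - p w * ln Z) \<le> (\<Sum>w\<in>S. exp (- b * c w) / Z - p w)"
    by (intro sum_mono tm)
  also have "\<dots> = 0" using Zp tot by (simp add: sum_subtractf sum_divide_distrib[symmetric] Z_def)
  finally have "(\<Sum>w\<in>S. - p w * ln (p w)) - b * (\<Sum>w\<in>S. p w * c w) - (\<Sum>w\<in>S. p w) * ln Z \<le> 0"
    by (simp add: sum_subtractf sum_distrib_left sum_distrib_right)
  thus ?thesis using tot unfolding Z_def by simp
qed

lemma fekete:
  fixes h :: "nat \<Rightarrow> real"
  assumes h0: "\<And>n. h n \<ge> 0" and sub: "\<And>m n. h (m + n) \<le> h m + h n"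
  shows "convergent (\<lambda>n. h n / real n)"
proof -
  define A where "A = (\<lambda>n. h n / real n) ` {1..}"
  define L where "L = Inf A"
  have bdd: "bdd_below A" unfolding A_def using h0 by (intro bdd_belowI[where m=0]) auto
  have Ane: "A \<noteq> {}" unfolding A_def by auto
  have low: "h n / real n \<ge> L" if "n \<ge> 1" for n
    unfolding L_def by (rule cInf_lower[OF _ bdd]) (use that in \<open>auto simp: A_def\<close>)
  have mult: "h (q * N + r) \<le> real q * h N + h r" for q N r
  proof (induction q)
    case 0 thus ?case by simp
  next
    case (Suc q)
    have "h (Suc q * N + r) = h (N + (q * N + r))" by (simp add: algebra_simps)
    also have "\<dots> \<le> h N + h (q * N + r)" by (rule sub)
    also have "\<dots> \<le> h N + (real q * h N + h r)" using Suc by simp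
    finally show ?case by (simp add: algebra_simps)
  qed
  have "(\<lambda>n. h n / real n) \<longlonglongrightarrow> L"
  proof (rule LIMSEQ_I)
    fix e :: real assume e: "e > 0"
    have "\<exists>x\<in>A. x < L + e / 2" unfolding L_def using Ane e
      by (subst cInf_less_iff[OF Ane bdd, symmetric]) simp
    then obtain N where N: "N \<ge> 1" "h N / real N < L + e / 2" unfolding A_def by auto
    define M where "M = (\<Sum>r<N. h r)"
    have hM: "h r \<le> M" if "r < N" for r
      unfolding M_def using that h0 by (intro member_le_sum) auto
    have M0: "M \<ge> 0" unfolding M_def using h0 by (intro sum_nonneg) auto
    obtain n0 :: nat where n0: "real n0 > 2 * M / e" using reals_Archimedean2 by blast
    show "\<exists>no. \<forall>n\<ge>no. norm (h n / real n - L) < e"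
    proof (intro exI allI impI)
      fix n assume nn: "n \<ge> max 1 n0"
      hence n1: "n \<ge> 1" and nr: "real n > 2 * M / e" using n0 by auto
      have npos: "real n > 0" using n1 by simp
      define q where "q = n div N"
      define r where "r = n mod N"
      have nqr: "n = q * N + r" unfolding q_def r_def by simp
      have rN: "r < N" unfolding r_def using N by simp
      have "h n \<le> real q * h N + M" using mult[of q N r] hM[OF rN] nqr by simp
      hence "h n / real n \<le> (real q * h N + M) / real n" using npos by (simp add: divide_right_mono)
      also have "\<dots> = (real q * real N / real n) * (h N / real N) + M / real n"
      proof -
        have "real q * h N / real n = (real q * real N / real n) * (h N / real N)"
          using N npos by (simp add: field_simps)
        thus ?thesis by (simp add: add_divide_distrib)
      qed
      also have "\<dots> \<le> 1 * (h N / real N) + M / real n"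
      proof -
        have "real q * real N \<le> real n" using nqr by (simp add: of_nat_mult[symmetric] del: of_nat_mult)
        hence "real q * real N / real n \<le> 1" using npos by simp
        moreover have "h N / real N \<ge> 0" using h0 by simp
        ultimately show ?thesis by (intro add_right_mono mult_right_mono) auto
      qed
      also have "M / real n < e / 2"
      proof -
        have "M < e / 2 * real n" using nr e by (simp add: field_simps)
        thus ?thesis using npos by (simp add: field_simps)
      qed
      hence "1 * (h N / real N) + M / real n < L + e" using N(2) by linarith
      finally have up: "h n / real n < L + e" .
      have "h n / real n \<ge> L" by (rule low[OF n1])
      thus "norm (h n / real n - L) < e" using up by simp
    qed
  qed
  thus ?thesis unfolding convergent_def by blast
qed

locale invm =
  fixes \<nu> :: "(nat \<Rightarrow> 'a::finite) measure"
  assumes inv: "inv_measure \<nu>"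
begin

lemma sets_nu: "sets \<nu> = sets shift_space" using inv unfolding inv_measure_def by simp
lemma prob_nu: "prob_space \<nu>" using inv unfolding inv_measure_def by simp
lemma invar: "A \<in> sets shift_space \<Longrightarrow> emeasure \<nu> (shift -` A) = emeasure \<nu> A"
  using inv unfolding inv_measure_def by simp

sublocale prob_space \<nu> by (rule prob_nu)

lemma space_nu: "space \<nu> = UNIV"
  using sets_eq_imp_space_eq[OF sets_nu] space_shift by simp

lemma cyl_nu: "cyl w \<in> sets \<nu>" using cyl_sets sets_nu by simp

definition "P w = measure \<nu> (cyl w)"

lemma P_nonneg: "P w \<ge> 0" unfolding P_def by simp
lemma P_le1: "P w \<le> 1" unfolding P_def by simp

lemma P_Nil: "P [] = 1"
proof -
  have "cyl [] = space \<nu>" unfolding cyl_def space_nu by simp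
  thus ?thesis unfolding P_def using prob_space by simp
qed

lemma P_snoc: "P u = (\<Sum>c\<in>UNIV. P (u @ [c]))"
proof -
  have e: "cyl u = (\<Union>c. cyl (u @ [c]))"
  proof
    show "cyl u \<subseteq> (\<Union>c. cyl (u @ [c]))"
    proof
      fix x assume x: "x \<in> cyl u"
      have "x \<in> cyl (u @ [x (length u)])" using x unfolding cyl_def by (auto simp: nth_append less_Suc_eq)
      thus "x \<in> (\<Union>c. cyl (u @ [c]))" by blast
    qed
    show "(\<Union>c. cyl (u @ [c])) \<subseteq> cyl u" unfolding cyl_def by (auto simp: nth_append)
  qed
  have d: "disjoint_family (\<lambda>c. cyl (u @ [c]))"
    unfolding disjoint_family_on_def cyl_def by (auto simp: nth_append)
  have "measure \<nu> (\<Union>c. cyl (u @ [c])) = (\<Sum>c\<in>UNIV. measure \<nu> (cyl (u @ [c])))"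
    by (rule finite_measure_finite_Union) (use cyl_nu d in auto)
  thus ?thesis unfolding P_def e by simp
qed

lemma P_cons: "P v = (\<Sum>c\<in>UNIV. P (c # v))"
proof -
  have e: "shift -` cyl v = (\<Union>c. cyl (c # v))"
  proof
    show "shift -` cyl v \<subseteq> (\<Union>c. cyl (c # v))"
    proof
      fix x assume x: "x \<in> shift -` cyl v"
      hence "\<forall>i<length v. x (Suc i) = v ! i" unfolding cyl_def shift_def by simp
      hence "x \<in> cyl (x 0 # v)" unfolding cyl_def by (auto simp: less_Suc_eq_0_disj)
      thus "x \<in> (\<Union>c. cyl (c # v))" by blast
    qed
    show "(\<Union>c. cyl (c # v)) \<subseteq> shift -` cyl v"
    proof
      fix x assume "x \<in> (\<Union>c. cyl (c # v))"
      then obtain c where "x \<in> cyl (c # v)" by blast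
      hence "\<forall>i<length v. x (Suc i) = v ! i" unfolding cyl_def by auto
      thus "x \<in> shift -` cyl v" unfolding cyl_def shift_def by simp
    qed
  qed
  have d: "disjoint_family (\<lambda>c. cyl (c # v))"
    unfolding disjoint_family_on_def cyl_def by auto
  have "measure \<nu> (shift -` cyl v) = measure \<nu> (cyl v)"
    unfolding measure_def using invar[OF cyl_sets] by simp
  moreover have "measure \<nu> (\<Union>c. cyl (c # v)) = (\<Sum>c\<in>UNIV. measure \<nu> (cyl (c # v)))"
    by (rule finite_measure_finite_Union) (use cyl_nu d in auto)
  ultimately show ?thesis unfolding P_def e by simp
qed

lemma P_append_sum: "P u = (\<Sum>v\<in>{v::'a list. length v = n}. P (u @ v))"
proof (induction n arbitrary: u)
  case 0
  have "{v::'a list. length v = 0} = {[]}" by auto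
  thus ?case by simp
next
  case (Suc n)
  have "(\<Sum>v\<in>{v::'a list. length v = Suc n}. P (u @ v)) = (\<Sum>c\<in>UNIV. \<Sum>v\<in>{v. length v = n}. P (u @ (c # v)))"
    by (rule sum_lists_Suc)
  also have "\<dots> = (\<Sum>c\<in>UNIV. \<Sum>v\<in>{v. length v = n}. P ((u @ [c]) @ v))" by simp
  also have "\<dots> = (\<Sum>c\<in>UNIV. P (u @ [c]))" by (simp only: Suc.IH[symmetric])
  also have "\<dots> = P u" by (rule P_snoc[symmetric])
  finally show ?case by simp
qed

lemma P_prepend_sum: "P v = (\<Sum>u\<in>{u::'a list. length u = m}. P (u @ v))"
proof (induction m arbitrary: v)
  case 0
  have "{v::'a list. length v = 0} = {[]}" by auto
  thus ?case by simp
next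
  case (Suc m)
  have "(\<Sum>u\<in>{u::'a list. length u = Suc m}. P (u @ v)) = (\<Sum>c\<in>UNIV. \<Sum>u\<in>{u. length u = m}. P ((c # u) @ v))"
    by (rule sum_lists_Suc)
  also have "\<dots> = (\<Sum>u\<in>{u. length u = m}. \<Sum>c\<in>UNIV. P (c # (u @ v)))"
    by (subst sum.swap) simp
  also have "\<dots> = (\<Sum>u\<in>{u::'a list. length u = m}. P (u @ v))"
    by (rule sum.cong) (simp_all add: P_cons[symmetric])
  also have "\<dots> = P v" by (rule Suc.IH[symmetric])
  finally show ?case by simp
qed

lemma P_total: "(\<Sum>w\<in>{w::'a list. length w = n}. P w) = 1"
  using P_append_sum[of "[]" n] P_Nil by simp

lemma H_eq: "block_entropy \<nu> n = (\<Sum>w\<in>{w::'a list. length w = n}. - P w * ln (P w))"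
  unfolding block_entropy_def P_def by simp

lemma H_nonneg: "block_entropy \<nu> n \<ge> 0"
  unfolding H_eq
proof (rule sum_nonneg)
  fix w :: "'a list"
  have "ln (P w) \<le> 0"
  proof (cases "P w = 0")
    case False
    hence "P w > 0" using P_nonneg[of w] by simp
    thus ?thesis using P_le1[of w] by simp
  qed simp
  thus "0 \<le> - P w * ln (P w)" using P_nonneg by (simp add: mult_nonneg_nonpos)
qed

lemma H_subadd: "block_entropy \<nu> (m + n) \<le> block_entropy \<nu> m + block_entropy \<nu> n"
proof -
  let ?U = "{u::'a list. length u = m}" and ?V = "{v::'a list. length v = n}"
  have "block_entropy \<nu> (m + n) = (\<Sum>u\<in>?U. \<Sum>v\<in>?V. - P (u @ v) * ln (P (u @ v)))"
    unfolding H_eq by (rule sum_lists_append)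
  also have "\<dots> \<le> (\<Sum>u\<in>?U. - (\<Sum>v\<in>?V. P (u @ v)) * ln (\<Sum>v\<in>?V. P (u @ v)))
                 + (\<Sum>v\<in>?V. - (\<Sum>u\<in>?U. P (u @ v)) * ln (\<Sum>u\<in>?U. P (u @ v)))"
  proof (rule joint_entropy)
    show "finite ?U" "finite ?V" by (rule lists_fin)+
    show "\<And>u v. u \<in> ?U \<Longrightarrow> v \<in> ?V \<Longrightarrow> 0 \<le> P (u @ v)" by (rule P_nonneg)
    show "(\<Sum>u\<in>?U. \<Sum>v\<in>?V. P (u @ v)) = 1"
      using P_total[of "m + n"] sum_lists_append[where m=m and n=n and f=P] by simp
  qed
  also have "\<dots> = block_entropy \<nu> m + block_entropy \<nu> n"
    unfolding H_eq by (simp add: P_append_sum[symmetric] P_prepend_sum[symmetric])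
  finally show ?thesis .
qed

lemma entropy_lim: "(\<lambda>n. block_entropy \<nu> n / real n) \<longlonglongrightarrow> ks_entropy \<nu>"
proof -
  have "convergent (\<lambda>n. block_entropy \<nu> n / real n)"
    by (rule fekete) (rule H_nonneg, rule H_subadd)
  thus ?thesis unfolding ks_entropy_def by (simp add: convergent_LIMSEQ_iff)
qed

end

lemma take_pre: "j \<le> m \<Longrightarrow> take j (pre m x) = pre j x"
  unfolding pre_def by (simp add: take_map)

locale mainloc = setting X a C d for X :: "(nat \<Rightarrow> 'a::finite) set" and a C d +
  fixes \<phi> :: "(nat \<Rightarrow> 'a) \<Rightarrow> real"
  assumes closed: "shift_closed X"
    and phi0: "\<And>x. x \<in> X \<Longrightarrow> \<phi> x = 0"
    and phi1: "\<And>x j. x \<notin> X \<Longrightarrow> shift_setdist x X = (1/2)^j \<Longrightarrow> \<phi> x = - a j"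
begin

lemma inL_pre: "x \<in> X \<Longrightarrow> inL X (pre n x)"
  unfolding inL_def pre_def by auto

lemma inL_pre_mono: "inL X (pre n x) \<Longrightarrow> m \<le> n \<Longrightarrow> inL X (pre m x)"
  using inL_take[of X "pre n x" m] take_pre[of m n x] by simp

lemma notX_ex: "x \<notin> X \<Longrightarrow> \<exists>n. \<not> inL X (pre n x)"
proof (rule ccontr)
  assume x: "x \<notin> X" and "\<not> (\<exists>n. \<not> inL X (pre n x))"
  hence "\<forall>n. inL X (pre n x)" by simp
  have "\<forall>n. \<exists>y\<in>X. \<forall>i<n. x i = y i"
  proof
    fix n
    obtain y where y: "y \<in> X" "\<forall>i<length (pre n x). y i = pre n x ! i"
      using \<open>\<forall>n. inL X (pre n x)\<close> unfolding inL_def by blast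
    have "\<forall>i<n. x i = y i" using y(2) unfolding pre_def by simp
    thus "\<exists>y\<in>X. \<forall>i<n. x i = y i" using y(1) by blast
  qed
  moreover have "(\<forall>n. \<exists>y\<in>X. \<forall>i<n. x i = y i) \<longrightarrow> x \<in> X"
    using closed unfolding shift_closed_def by (rule spec)
  ultimately have "x \<in> X" by (rule mp[rotated])
  with x show False by simp
qed

definition J :: "(nat \<Rightarrow> 'a) \<Rightarrow> nat" where
  "J x = (LEAST j. \<not> inL X (pre (Suc j) x))"

lemma J_props:
  assumes "x \<notin> X"
  shows "\<not> inL X (pre (Suc (J x)) x)" "inL X (pre (J x) x)"
proof -
  obtain n where n: "\<not> inL X (pre n x)" using notX_ex[OF assms] by blast
  have "n \<noteq> 0"
  proof
    assume "n = 0" hence "pre n x = []" unfolding pre_def by simp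
    thus False using n inL_Nil[OF ne] by simp
  qed
  then obtain j where "n = Suc j" by (cases n) auto
  hence ex: "\<exists>j. \<not> inL X (pre (Suc j) x)" using n by blast
  show "\<not> inL X (pre (Suc (J x)) x)" unfolding J_def by (rule LeastI_ex[OF ex])
  show "inL X (pre (J x) x)"
  proof (cases "J x")
    case 0 thus ?thesis using inL_Nil[OF ne] unfolding pre_def by simp
  next
    case (Suc j)
    hence "j < J x" by simp
    hence "\<not> \<not> inL X (pre (Suc j) x)" unfolding J_def by (rule not_less_Least)
    thus ?thesis using Suc by simp
  qed
qed

lemma inL_pre_iff: "x \<notin> X \<Longrightarrow> inL X (pre n x) \<longleftrightarrow> n \<le> J x"
proof
  assume x: "x \<notin> X" and i: "inL X (pre n x)"
  show "n \<le> J x"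
  proof (rule ccontr)
    assume "\<not> n \<le> J x"
    hence "Suc (J x) \<le> n" by simp
    hence "inL X (pre (Suc (J x)) x)" using inL_pre_mono[OF i] by blast
    thus False using J_props(1)[OF x] by simp
  qed
next
  assume x: "x \<notin> X" and "n \<le> J x"
  thus "inL X (pre n x)" using inL_pre_mono[OF J_props(2)[OF x]] by blast
qed

lemma sdist_ge:
  assumes x: "x \<notin> X" and y: "y \<in> X"
  shows "sdist x y \<ge> (1/2)^(J x)"
proof -
  have xy: "x \<noteq> y" using x y by auto
  have "\<exists>i\<le>J x. x i \<noteq> y i"
  proof (rule ccontr)
    assume "\<not> (\<exists>i\<le>J x. x i \<noteq> y i)"
    hence nx: "\<forall>i\<le>J x. x i = y i" by blast
    have "\<forall>i<Suc (J x). y i = pre (Suc (J x)) x ! i"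
    proof (intro allI impI)
      fix i assume i: "i < Suc (J x)"
      hence "x i = y i" using nx by simp
      moreover have "pre (Suc (J x)) x ! i = x i" using i unfolding pre_def by (simp del: upt_Suc)
      ultimately show "y i = pre (Suc (J x)) x ! i" by simp
    qed
    hence "inL X (pre (Suc (J x)) x)" using y unfolding inL_def by auto
    thus False using J_props(1)[OF x] by simp
  qed
  then obtain i where i: "i \<le> J x" "x i \<noteq> y i" by blast
  have "(LEAST i. x i \<noteq> y i) \<le> i" using i(2) by (rule Least_le)
  hence "(LEAST i. x i \<noteq> y i) \<le> J x" using i(1) by simp
  hence "(1/2::real)^(J x) \<le> (1/2)^(LEAST i. x i \<noteq> y i)" by (rule power_decreasing) auto
  thus ?thesis unfolding sdist_def using xy by simp
qed

lemma setdist_eq: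
  assumes x: "x \<notin> X"
  shows "shift_setdist x X = (1/2)^(J x)"
proof -
  obtain y where y: "y \<in> X" "\<forall>i<J x. y i = pre (J x) x ! i"
    using J_props(2)[OF x] unfolding inL_def by auto
  hence agree: "\<forall>i<J x. x i = y i" unfolding pre_def by simp
  have xy: "x \<noteq> y" using x y by auto
  then obtain k where k: "x k \<noteq> y k" by auto
  have "J x \<le> (LEAST i. x i \<noteq> y i)"
  proof (rule ccontr)
    assume "\<not> J x \<le> (LEAST i. x i \<noteq> y i)"
    hence "(LEAST i. x i \<noteq> y i) < J x" by simp
    moreover have "x (LEAST i. x i \<noteq> y i) \<noteq> y (LEAST i. x i \<noteq> y i)" using k by (rule LeastI)
    ultimately show False using agree by blast
  qed
  hence "(1/2::real)^(LEAST i. x i \<noteq> y i) \<le> (1/2)^(J x)" by (rule power_decreasing) auto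
  hence le: "sdist x y \<le> (1/2)^(J x)" unfolding sdist_def using xy by simp
  have eq: "sdist x y = (1/2)^(J x)" using le sdist_ge[OF x y(1)] by simp
  show ?thesis unfolding shift_setdist_def
  proof (rule cInf_eq_minimum)
    show "(1/2)^(J x) \<in> sdist x ` X" using eq y(1) by (metis image_eqI)
    fix z assume "z \<in> sdist x ` X"
    then obtain y' where "y' \<in> X" "z = sdist x y'" by blast
    thus "(1/2)^(J x) \<le> z" using sdist_ge[OF x] by simp
  qed
qed

lemma phi_out: "x \<notin> X \<Longrightarrow> \<phi> x = - a (J x)"
  using phi1 setdist_eq by blast

lemma phi_nonpos: "\<phi> x \<le> 0"
  using phi0 phi_out a_nonneg by (cases "x \<in> X") auto

lemma phi_bound: "\<bar>\<phi> x\<bar> \<le> a 0"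
proof (cases "x \<in> X")
  case True thus ?thesis using phi0 a_nonneg by simp
next
  case False
  have "a (J x) \<le> a 0" by (rule am) simp
  thus ?thesis using phi_out[OF False] a_nonneg[of "J x"] by simp
qed

lemma phi_neg_out: "x \<notin> X \<Longrightarrow> - \<phi> x > 0"
  using phi_out a_pos by simp

lemma jw_pre:
  assumes "\<not> inL X (pre m x)"
  shows "x \<notin> X" "jw X (pre m x) = J x"
proof -
  show x: "x \<notin> X" using assms inL_pre by blast
  have Jm: "J x < m" using assms inL_pre_iff[OF x] by simp
  have "J x \<le> jw X (pre m x)"
    using jw_props(3)[OF ne, of "J x" "pre m x"] Jm take_pre[of "J x" m x] J_props(2)[OF x] by simp
  moreover have "jw X (pre m x) \<le> J x"
  proof -
    have "jw X (pre m x) \<le> m" using jw_props(1)[OF ne, of "pre m x"] by simp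
    hence "inL X (pre (jw X (pre m x)) x)"
      using jw_props(2)[OF ne, of "pre m x"] take_pre[of "jw X (pre m x)" m x] by simp
    thus ?thesis using inL_pre_iff[OF x] by simp
  qed
  ultimately show "jw X (pre m x) = J x" by simp
qed

lemma cp_pre_le: "cp X a (pre m x) \<le> - \<phi> x"
proof (cases "inL X (pre m x)")
  case True thus ?thesis unfolding cp_def using phi_nonpos[of x] by simp
next
  case False
  thus ?thesis unfolding cp_def using jw_pre[OF False] phi_out by simp
qed

lemma phi_lim: "(\<lambda>n. - cp X a (pre n x)) \<longlonglongrightarrow> \<phi> x"
proof (cases "x \<in> X")
  case True
  hence "(\<lambda>n. - cp X a (pre n x)) = (\<lambda>n. \<phi> x)" using inL_pre phi0 unfolding cp_def by auto
  thus ?thesis by simp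
next
  case False
  have "eventually (\<lambda>n. - cp X a (pre n x) = \<phi> x) sequentially"
  proof (rule eventually_sequentiallyI[of "Suc (J x)"])
    fix n assume "Suc (J x) \<le> n"
    hence "\<not> inL X (pre n x)" using inL_pre_iff[OF False] by simp
    thus "- cp X a (pre n x) = \<phi> x" unfolding cp_def using jw_pre phi_out[OF False] by simp
  qed
  thus ?thesis by (rule tendsto_eventually)
qed

lemma phi_meas: "\<phi> \<in> borel_measurable shift_space"
  by (rule borel_measurable_LIMSEQ_real[OF phi_lim]) (rule pre_fun_meas)

lemma X_sets: "X \<in> sets shift_space"
proof -
  have "X = (\<Inter>n. {x. inL X (pre n x)})"
  proof
    show "X \<subseteq> (\<Inter>n. {x. inL X (pre n x)})" using inL_pre by auto
    show "(\<Inter>n. {x. inL X (pre n x)}) \<subseteq> X" using notX_ex by blast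
  qed
  moreover have "(\<Inter>n. {x. inL X (pre n x)}) \<in> sets shift_space"
    by (rule sets.countable_INT) (auto intro: pre_set_sets)
  ultimately show ?thesis by simp
qed

end

lemma lim1: "(\<lambda>n::nat. ln (real n + 1) / real n) \<longlonglongrightarrow> 0" by real_asymp
lemma lim2: "(\<lambda>n::nat. 1 / real n) \<longlonglongrightarrow> 0" by real_asymp
lemma lim3: "(\<lambda>n::nat. ln (real n + 1) ^ 2 / real n) \<longlonglongrightarrow> 0" by real_asymp

locale mi = mainloc X a C d \<phi> + invm \<nu>
  for X :: "(nat \<Rightarrow> 'a::finite) set" and a C d \<phi> and \<nu> :: "(nat \<Rightarrow> 'a) measure"
begin

lemma phi_meas_nu: "\<phi> \<in> borel_measurable \<nu>"
proof -
  show ?thesis unfolding measurable_cong_sets[OF sets_nu refl] by (rule phi_meas)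
qed

lemma integrable_phi: "integrable \<nu> \<phi>"
  by (rule integrable_const_bound[where B="a 0"]) (use phi_bound phi_meas_nu in auto)

lemma integrable_mphi: "integrable \<nu> (\<lambda>x. - \<phi> x)"
  using integrable_phi by (rule integrable_minus)

lemma int_cp: "(\<Sum>v\<in>{v::'a list. length v = m}. P v * cp X a v) \<le> (\<integral>x. - \<phi> x \<partial>\<nu>)"
proof -
  let ?L = "{v::'a list. length v = m}"
  have pt: "(\<Sum>v\<in>?L. cp X a v * indicator (cyl v) x) = cp X a (pre m x)" for x
  proof -
    have "(\<Sum>v\<in>?L. cp X a v * indicator (cyl v) x) = (\<Sum>v\<in>?L. if v = pre m x then cp X a v else 0)"
    proof (rule sum.cong)
      fix v assume "v \<in> ?L"
      hence "x \<in> cyl v \<longleftrightarrow> v = pre m x" using mem_cyl_pre[of x v] by auto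
      thus "cp X a v * indicator (cyl v) x = (if v = pre m x then cp X a v else 0)"
        by (simp add: indicator_def)
    qed simp
    also have "\<dots> = cp X a (pre m x)" by (subst sum.delta[OF lists_fin]) simp
    finally show ?thesis .
  qed
  have intg: "integrable \<nu> (\<lambda>x. cp X a v * indicator (cyl v) x)" for v
  proof -
    have "emeasure \<nu> (cyl v) < \<infinity>" using emeasure_finite[of "cyl v"] by (simp add: less_top[symmetric])
    thus ?thesis by (intro integrable_mult_right integrable_real_indicator cyl_nu)
  qed
  have "(\<integral>x. cp X a (pre m x) \<partial>\<nu>) = (\<integral>x. (\<Sum>v\<in>?L. cp X a v * indicator (cyl v) x) \<partial>\<nu>)"
    using pt by simp
  also have "\<dots> = (\<Sum>v\<in>?L. (\<integral>x. cp X a v * indicator (cyl v) x \<partial>\<nu>))"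
    by (rule Bochner_Integration.integral_sum[where f="\<lambda>v x. cp X a v * indicator (cyl v) x"]) (rule intg)
  also have "\<dots> = (\<Sum>v\<in>?L. P v * cp X a v)"
    by (rule sum.cong) (simp_all add: P_def space_nu)
  finally have ie: "(\<integral>x. cp X a (pre m x) \<partial>\<nu>) = (\<Sum>v\<in>?L. P v * cp X a v)" .
  have ic: "integrable \<nu> (\<lambda>x. cp X a (pre m x))"
  proof -
    have "integrable \<nu> (\<lambda>x. \<Sum>v\<in>?L. cp X a v * indicator (cyl v) x)"
      by (rule Bochner_Integration.integrable_sum[where f="\<lambda>v x. cp X a v * indicator (cyl v) x"]) (rule intg)
    thus ?thesis using pt by simp
  qed
  have "(\<integral>x. cp X a (pre m x) \<partial>\<nu>) \<le> (\<integral>x. - \<phi> x \<partial>\<nu>)"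
    by (rule integral_mono[OF ic integrable_mphi]) (rule cp_pre_le)
  thus ?thesis using ie by simp
qed

lemma cost_sum: "(\<Sum>w\<in>{w::'a list. length w = n}. P w * cost X a w) \<le> real n * (\<integral>x. - \<phi> x \<partial>\<nu>)"
proof -
  let ?I = "(\<integral>x. - \<phi> x \<partial>\<nu>)"
  have "(\<Sum>w\<in>{w::'a list. length w = n}. P w * cost X a w) = (\<Sum>w\<in>{w::'a list. length w = n}. \<Sum>k<n. P w * cp X a (drop k w))"
    unfolding cost_def by (rule sum.cong) (simp_all add: sum_distrib_left)
  also have "\<dots> = (\<Sum>k<n. \<Sum>w\<in>{w::'a list. length w = n}. P w * cp X a (drop k w))"
    by (rule sum.swap)
  also have "\<dots> \<le> (\<Sum>k<n. ?I)"
  proof (rule sum_mono)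
    fix k assume k: "k \<in> {..<n}"
    have nk: "n = k + (n - k)" using k by simp
    have "(\<Sum>w\<in>{w::'a list. length w = n}. P w * cp X a (drop k w))
        = (\<Sum>u\<in>{u::'a list. length u = k}. \<Sum>v\<in>{v::'a list. length v = n - k}. P (u @ v) * cp X a (drop k (u @ v)))"
      by (subst nk) (rule sum_lists_append)
    also have "\<dots> = (\<Sum>u\<in>{u::'a list. length u = k}. \<Sum>v\<in>{v::'a list. length v = n - k}. P (u @ v) * cp X a v)"
      by (intro sum.cong refl) simp
    also have "\<dots> = (\<Sum>v\<in>{v::'a list. length v = n - k}. (\<Sum>u\<in>{u::'a list. length u = k}. P (u @ v)) * cp X a v)"
      by (subst sum.swap) (simp add: sum_distrib_right)
    also have "\<dots> = (\<Sum>v\<in>{v::'a list. length v = n - k}. P v * cp X a v)"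
      by (simp add: P_prepend_sum[symmetric])
    also have "\<dots> \<le> ?I" by (rule int_cp)
    finally show "(\<Sum>w\<in>{w::'a list. length w = n}. P w * cp X a (drop k w)) \<le> ?I" .
  qed
  also have "\<dots> = real n * ?I" by simp
  finally show ?thesis .
qed

definition "Z n = (\<Sum>w\<in>{w::'a list. length w = n}. exp (- \<beta> * cost X a w))"

lemma Z_pos: "Z n > 0"
  unfolding Z_def using lists_fin[of n]
  by (intro sum_pos) (auto intro: exI[of _ "replicate n undefined"])

lemma H_bound: "block_entropy \<nu> n \<le> \<beta> * (real n * (\<integral>x. - \<phi> x \<partial>\<nu>)) + ln (Z n)"
proof -
  have "block_entropy \<nu> n \<le> \<beta> * (\<Sum>w\<in>{w::'a list. length w = n}. P w * cost X a w) + ln (Z n)"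
    unfolding H_eq Z_def by (rule gibbs) (simp_all add: lists_fin P_nonneg P_total)
  also have "\<dots> \<le> \<beta> * (real n * (\<integral>x. - \<phi> x \<partial>\<nu>)) + ln (Z n)"
    using mult_left_mono[OF cost_sum beta_nonneg] by (rule add_right_mono)
  finally show ?thesis .
qed

lemma ks_le: "ks_entropy \<nu> \<le> \<beta> * (\<integral>x. - \<phi> x \<partial>\<nu>)"
proof -
  let ?I = "(\<integral>x. - \<phi> x \<partial>\<nu>)"
  define B where "B n = (real d + 1) * (ln (real n + 1) / real n) + ln Cy * (1 / real n) + \<gamma> * (ln (real n + 1) ^ 2 / real n)" for n :: nat
  have B0: "B \<longlonglongrightarrow> (real d + 1) * 0 + ln Cy * 0 + \<gamma> * 0"
    unfolding B_def by (intro tendsto_add tendsto_mult tendsto_const lim1 lim2 lim3)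
  have le: "block_entropy \<nu> n / real n \<le> \<beta> * ?I + B n" if n: "n \<ge> 1" for n
  proof -
    have npos: "real n > 0" using n by simp
    have "ln (Z n) \<le> ln ((real n + 1) * (Cy * (real n + 1)^d * exp (V n)))"
      using Z_pos Z_bound Cy_ge1 unfolding Z_def by (subst ln_le_cancel_iff) auto
    also have "\<dots> = (real d + 1) * ln (real n + 1) + ln Cy + \<gamma> * ln (real n + 1) ^ 2"
    proof -
      have p1: "real n + 1 > 0" by simp
      have p2: "Cy > 0" using Cy_ge1 by simp
      have p3: "(real n + 1)^d > 0" by simp
      have "ln ((real n + 1) * (Cy * (real n + 1)^d * exp (V n))) = ln (real n + 1) + ln (Cy * (real n + 1)^d * exp (V n))"
        using p1 p2 p3 by (intro ln_mult_pos) auto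
      also have "ln (Cy * (real n + 1)^d * exp (V n)) = ln (Cy * (real n + 1)^d) + ln (exp (V n))"
        using p2 p3 by (intro ln_mult_pos) auto
      also have "ln (Cy * (real n + 1)^d) = ln Cy + ln ((real n + 1)^d)"
        using p2 p3 by (intro ln_mult_pos) auto
      also have "ln ((real n + 1)^d) = real d * ln (real n + 1)" by (rule ln_realpow)
      finally show ?thesis unfolding V_def by (simp add: algebra_simps)
    qed
    finally have lz: "ln (Z n) \<le> (real d + 1) * ln (real n + 1) + ln Cy + \<gamma> * ln (real n + 1) ^ 2" .
    have "block_entropy \<nu> n / real n \<le> (\<beta> * (real n * ?I) + ln (Z n)) / real n"
      using H_bound npos by (intro divide_right_mono) auto
    also have "\<dots> = \<beta> * ?I + ln (Z n) / real n" using npos by (simp add: field_simps)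
    also have "\<dots> \<le> \<beta> * ?I + ((real d + 1) * ln (real n + 1) + ln Cy + \<gamma> * ln (real n + 1) ^ 2) / real n"
      using lz npos by (simp add: divide_right_mono)
    also have "\<dots> = \<beta> * ?I + B n" unfolding B_def by (simp add: add_divide_distrib)
    finally show ?thesis .
  qed
  have "(\<lambda>n. \<beta> * ?I + B n) \<longlonglongrightarrow> \<beta> * ?I + 0"
    by (intro tendsto_add tendsto_const) (use B0 in simp)
  hence lim: "(\<lambda>n. \<beta> * ?I + B n) \<longlonglongrightarrow> \<beta> * ?I" by simp
  show ?thesis
    by (rule LIMSEQ_le[OF entropy_lim lim]) (use le in auto)
qed

lemma measX_sets: "X \<in> sets \<nu>" using X_sets sets_nu by simp

lemma P_zero_out:
  assumes "emeasure \<nu> X = 1" "\<not> inL X w"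
  shows "P w = 0"
proof -
  have "cyl w \<subseteq> space \<nu> - X"
  proof
    fix x assume x: "x \<in> cyl w"
    have "x \<notin> X"
    proof
      assume "x \<in> X"
      hence "inL X w" using x unfolding inL_def cyl_def by auto
      with assms(2) show False by simp
    qed
    thus "x \<in> space \<nu> - X" using space_nu by simp
  qed
  hence "P w \<le> measure \<nu> (space \<nu> - X)" unfolding P_def
    by (intro finite_measure_mono) (use measX_sets in auto)
  also have "\<dots> = 1 - measure \<nu> X" using measX_sets by (rule prob_compl)
  also have "measure \<nu> X = 1" using assms(1) by (simp add: measure_def)
  finally show ?thesis using P_nonneg[of w] by simp
qed

lemma ks_zero_on:
  assumes e: "emeasure \<nu> X = 1"
  shows "ks_entropy \<nu> = 0"
proof -
  define L where "L n = {w::'a list. length w = n \<and> inL X w}" for n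
  have Lsub: "L n \<subseteq> {w. length w = n}" for n unfolding L_def by auto
  have Lfin: "finite (L n)" for n using Lsub lists_fin by (rule finite_subset)
  have HL: "block_entropy \<nu> n = (\<Sum>w\<in>L n. - P w * ln (P w))" for n
    unfolding H_eq by (rule sum.mono_neutral_right) (use lists_fin Lsub P_zero_out[OF e] in \<open>auto simp: L_def\<close>)
  have PL: "(\<Sum>w\<in>L n. P w) = 1" for n
  proof -
    have "(\<Sum>w\<in>L n. P w) = (\<Sum>w\<in>{w::'a list. length w = n}. P w)"
      by (rule sum.mono_neutral_left) (use lists_fin Lsub P_zero_out[OF e] in \<open>auto simp: L_def\<close>)
    thus ?thesis using P_total by simp
  qed
  have up: "block_entropy \<nu> n \<le> ln (Cy * (real n + 1)^d)" for n
  proof -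
    have "block_entropy \<nu> n \<le> 0 * (\<Sum>w\<in>L n. P w * 0) + ln (\<Sum>w\<in>L n. exp (- 0 * 0))"
      unfolding HL by (rule gibbs[OF Lfin]) (simp_all add: P_nonneg PL)
    also have "\<dots> = ln (real (card (L n)))" by simp
    also have "\<dots> \<le> ln (Cy * (real n + 1)^d)"
    proof -
      have "L n \<noteq> {}" using PL[of n] by auto
      hence "card (L n) > 0" using Lfin by (simp add: card_gt_0_iff)
      moreover have "real (card (L n)) \<le> Cy * (real n + 1)^d" using cardL unfolding L_def by simp
      ultimately show ?thesis by (subst ln_le_cancel_iff) (use Cy_ge1 in auto)
    qed
    finally show ?thesis .
  qed
  define B where "B n = ln Cy * (1 / real n) + real d * (ln (real n + 1) / real n)" for n :: nat
  have B0: "B \<longlonglongrightarrow> ln Cy * 0 + real d * 0"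
    unfolding B_def by (intro tendsto_add tendsto_mult tendsto_const lim1 lim2)
  have "(\<lambda>n. block_entropy \<nu> n / real n) \<longlonglongrightarrow> 0"
  proof (rule tendsto_sandwich[where f="\<lambda>n. 0" and h=B])
    show "eventually (\<lambda>n. 0 \<le> block_entropy \<nu> n / real n) sequentially"
      using H_nonneg by simp
    show "eventually (\<lambda>n. block_entropy \<nu> n / real n \<le> B n) sequentially"
    proof (rule eventually_sequentiallyI[of 1])
      fix n :: nat assume "1 \<le> n"
      hence npos: "real n > 0" by simp
      have "ln (Cy * (real n + 1)^d) = ln Cy + real d * ln (real n + 1)"
        using Cy_ge1 by (simp add: ln_mult ln_realpow)
      hence "block_entropy \<nu> n \<le> ln Cy + real d * ln (real n + 1)" using up[of n] by simp
      hence "block_entropy \<nu> n / real n \<le> (ln Cy + real d * ln (real n + 1)) / real n"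
        using npos by (intro divide_right_mono) auto
      also have "\<dots> = B n" unfolding B_def by (simp add: add_divide_distrib)
      finally show "block_entropy \<nu> n / real n \<le> B n" .
    qed
    show "(\<lambda>n. 0) \<longlonglongrightarrow> (0::real)" by simp
    show "B \<longlonglongrightarrow> 0" using B0 by simp
  qed
  thus ?thesis using entropy_lim LIMSEQ_unique by blast
qed

lemma int_zero_on:
  assumes e: "emeasure \<nu> X = 1"
  shows "(\<integral>x. \<phi> x \<partial>\<nu>) = 0"
proof -
  have "prob X = 1" using e by (simp add: measure_def)
  hence "AE x in \<nu>. x \<in> X" using AE_in_set_eq_1[OF measX_sets] by simp
  hence "AE x in \<nu>. \<phi> x = 0" by (rule AE_mp) (use phi0 in auto)
  thus ?thesis by (rule integral_eq_zero_AE)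
qed

lemma int_pos:
  assumes "(\<integral>x. - \<phi> x \<partial>\<nu>) = 0"
  shows "emeasure \<nu> X = 1"
proof -
  have "AE x in \<nu>. - \<phi> x = 0"
    using integral_nonneg_eq_0_iff_AE[OF integrable_mphi] assms phi_nonpos by simp
  hence "AE x in \<nu>. x \<in> X" by (rule AE_mp) (use phi_neg_out in force)
  hence "prob X = 1" using AE_in_set_eq_1[OF measX_sets] by simp
  thus ?thesis using emeasure_eq_measure[of X] by simp
qed

lemma int_mphi_nonneg: "(\<integral>x. - \<phi> x \<partial>\<nu>) \<ge> 0"
  by (rule integral_nonneg_AE) (use phi_nonpos in auto)

end

lemma shift_meas: "(shift :: (nat \<Rightarrow> 'a) \<Rightarrow> (nat \<Rightarrow> 'a)) \<in> shift_space \<rightarrow>\<^sub>M shift_space"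
proof -
  have "(\<lambda>\<omega> i. \<omega> (Suc i)) \<in> measurable (shift_space :: (nat \<Rightarrow> 'a) measure) (Pi\<^sub>M UNIV (\<lambda>_. count_space UNIV))"
  proof (rule measurable_PiM_single')
    fix i :: nat
    show "(\<lambda>\<omega>::nat \<Rightarrow> 'a. \<omega> (Suc i)) \<in> measurable shift_space (count_space UNIV)"
      unfolding shift_space_def by (rule measurable_component_singleton) simp
  next
    show "(\<lambda>(\<omega>::nat \<Rightarrow> 'a) i. \<omega> (Suc i)) \<in> space shift_space \<rightarrow> (\<Pi>\<^sub>E i\<in>UNIV. space (count_space UNIV))"
      by simp
  qed
  thus ?thesis unfolding shift_def[abs_def] shift_space_def[symmetric] by simp
qed

lemma language_eq: "language X n = {w. length w = n \<and> inL X w}"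
proof
  show "language X n \<subseteq> {w. length w = n \<and> inL X w}"
  proof
    fix w assume "w \<in> language X n"
    then obtain x where x: "x \<in> X" "w = map x [0..<n]" unfolding language_def by blast
    have "\<forall>i<length w. x i = w ! i" using x(2) by simp
    thus "w \<in> {w. length w = n \<and> inL X w}" using x unfolding inL_def by auto
  qed
  show "{w. length w = n \<and> inL X w} \<subseteq> language X n"
  proof
    fix w assume "w \<in> {w. length w = n \<and> inL X w}"
    then obtain x where x: "x \<in> X" "\<forall>i<length w. x i = w ! i" "length w = n" unfolding inL_def by blast
    have "w = map x [0..<n]" using x(2,3) by (intro nth_equalityI) auto
    thus "w \<in> language X n" using x(1) unfolding language_def by blast
  qed
qed

lemma exists_inv_on:
  fixes X0 :: "(nat \<Rightarrow> 'a::finite) set"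
  assumes ss: "subshift X0" and ms: "minimal_support X0"
  shows "\<exists>\<nu>. inv_measure_on X0 \<nu>"
proof (rule ccontr)
  assume no: "\<not> (\<exists>\<nu>. inv_measure_on X0 \<nu>)"
  define c :: 'a where "c = undefined"
  define z :: "nat \<Rightarrow> 'a" where "z = (\<lambda>_. c)"
  have shz: "shift z = z" unfolding shift_def z_def by simp
  have "subshift {z}"
    unfolding subshift_def
  proof (intro conjI)
    show "{z} \<noteq> {}" by simp
    show "shift ` {z} \<subseteq> {z}" using shz by simp
    show "shift_closed {z}" unfolding shift_closed_def
    proof (intro allI impI)
      fix x assume h: "\<forall>n. \<exists>y\<in>{z}. \<forall>i<n. x i = y i"
      have "x i = z i" for i using h[rule_format, of "Suc i"] by auto
      thus "x \<in> {z}" by auto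
    qed
  qed
  hence "X0 \<subseteq> {z}" using ms no unfolding minimal_support_def by blast
  moreover have "X0 \<noteq> {}" using ss unfolding subshift_def by simp
  ultimately have X0z: "X0 = {z}" by blast
  define \<nu> :: "(nat \<Rightarrow> 'a) measure" where "\<nu> = return shift_space z"
  have "inv_measure_on X0 \<nu>"
    unfolding inv_measure_on_def inv_measure_def
  proof (intro conjI ballI)
    show "sets \<nu> = sets shift_space" unfolding \<nu>_def by simp
    show "prob_space \<nu>" unfolding \<nu>_def by (rule prob_space_return) (simp add: space_shift)
    fix A :: "(nat \<Rightarrow> 'a) set" assume A: "A \<in> sets shift_space"
    have "shift -` A \<inter> space shift_space \<in> sets shift_space" by (rule measurable_sets[OF shift_meas A])
    hence A': "shift -` A \<in> sets shift_space" by (simp add: space_shift)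
    show "emeasure \<nu> (shift -` A) = emeasure \<nu> A"
      unfolding \<nu>_def using A A' shz by (simp add: indicator_def)
  next
    have "{z} \<in> sets shift_space"
    proof -
      have "{z} = (\<Inter>i. {x. x i = c})" unfolding z_def by auto
      also have "\<dots> \<in> sets shift_space" by (rule sets.countable_INT) (auto intro: comp_sets)
      finally show ?thesis .
    qed
    thus "emeasure \<nu> X0 = 1" unfolding \<nu>_def X0z by simp
  qed
  with no show False by blast
qed

theorem corollary5p5:
  fixes X0 :: "(nat \<Rightarrow> 'a::finite) set"
    and a :: "nat \<Rightarrow> real"
    and \<phi> :: "(nat \<Rightarrow> 'a) \<Rightarrow> real"
  assumes "subshift X0"
    and "polynomial_complexity X0"
    and "minimal_support X0"
    and "\<And>j. a (Suc j) \<le> a j"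
    and "\<And>j. j \<ge> 1 \<Longrightarrow> a j \<ge> (ln (real j))^2 / real j"
    and "\<And>x. x \<in> X0 \<Longrightarrow> \<phi> x = 0"
    and "\<And>x j. x \<notin> X0 \<Longrightarrow> shift_setdist x X0 = (1/2)^j \<Longrightarrow> \<phi> x = - a j"
  shows "freezes_on \<phi> X0"
proof -
  obtain C :: real and d :: nat where poly: "\<And>n. n \<ge> 1 \<Longrightarrow> real (complexity X0 n) \<le> C * real n ^ d"
    using assms(2) unfolding polynomial_complexity_def by blast
  have ne: "X0 \<noteq> {}" and cl: "shift_closed X0" and sh: "shift ` X0 \<subseteq> X0"
    using assms(1) unfolding subshift_def by auto
  interpret M: mainloc X0 a C d \<phi>
  proof (unfold_locales)
    show "X0 \<noteq> {}" by (rule ne)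
    show "shift ` X0 \<subseteq> X0" by (rule sh)
    show "\<And>j. a (Suc j) \<le> a j" by (rule assms(4))
    show "\<And>j. 1 \<le> j \<Longrightarrow> ln (real j)^2 / real j \<le> a j" by (rule assms(5))
    show "\<And>n. 1 \<le> n \<Longrightarrow> real (card {w. length w = n \<and> inL X0 w}) \<le> C * real n ^ d"
      using poly unfolding complexity_def language_eq by blast
    show "shift_closed X0" by (rule cl)
    show "\<And>x. x \<in> X0 \<Longrightarrow> \<phi> x = 0" by (rule assms(6))
    show "\<And>x j. x \<notin> X0 \<Longrightarrow> shift_setdist x X0 = (1/2)^j \<Longrightarrow> \<phi> x = - a j" by (rule assms(7))
  qed
  obtain \<nu>0 where \<nu>0: "inv_measure_on X0 \<nu>0" using exists_inv_on[OF assms(1,3)] by blast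
  let ?b = "M.\<beta>"
  have key: "ks_entropy \<nu> + integral\<^sup>L \<nu> (\<lambda>x. b * \<phi> x) \<le> 0 \<and>
             (ks_entropy \<nu> + integral\<^sup>L \<nu> (\<lambda>x. b * \<phi> x) = 0 \<longleftrightarrow> emeasure \<nu> X0 = 1) \<and>
             (emeasure \<nu> X0 = 1 \<longrightarrow> ks_entropy \<nu> = 0)"
    if b: "b > ?b" and inv: "inv_measure \<nu>" for b \<nu>
  proof -
    interpret N: mi X0 a C d \<phi> \<nu> by unfold_locales (rule inv)
    define I where "I = (\<integral>x. - \<phi> x \<partial>\<nu>)"
    have I0: "I \<ge> 0" unfolding I_def by (rule N.int_mphi_nonneg)
    have ks: "ks_entropy \<nu> \<le> ?b * I" unfolding I_def by (rule N.ks_le)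
    have ie: "integral\<^sup>L \<nu> (\<lambda>x. b * \<phi> x) = - (b * I)" unfolding I_def by simp
    have le: "ks_entropy \<nu> + integral\<^sup>L \<nu> (\<lambda>x. b * \<phi> x) \<le> (?b - b) * I"
      using ks ie by (simp add: algebra_simps)
    have "(?b - b) * I \<le> 0" using b I0 by (simp add: mult_nonpos_nonneg)
    hence c1: "ks_entropy \<nu> + integral\<^sup>L \<nu> (\<lambda>x. b * \<phi> x) \<le> 0" using le by linarith
    have c3: "emeasure \<nu> X0 = 1 \<longrightarrow> ks_entropy \<nu> = 0" using N.ks_zero_on by blast
    have c2: "ks_entropy \<nu> + integral\<^sup>L \<nu> (\<lambda>x. b * \<phi> x) = 0 \<longleftrightarrow> emeasure \<nu> X0 = 1"
    proof
      assume "ks_entropy \<nu> + integral\<^sup>L \<nu> (\<lambda>x. b * \<phi> x) = 0"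
      hence "(?b - b) * I \<ge> 0" using le by linarith
      hence "(b - ?b) * I \<le> 0" by (simp add: algebra_simps)
      moreover have "b - ?b > 0" using b by simp
      ultimately have "I \<le> 0" by (simp add: mult_le_0_iff)
      hence "I = 0" using I0 by simp
      thus "emeasure \<nu> X0 = 1" unfolding I_def by (rule N.int_pos)
    next
      assume e: "emeasure \<nu> X0 = 1"
      have "integral\<^sup>L \<nu> \<phi> = 0" by (rule N.int_zero_on[OF e])
      thus "ks_entropy \<nu> + integral\<^sup>L \<nu> (\<lambda>x. b * \<phi> x) = 0" using N.ks_zero_on[OF e] by simp
    qed
    show ?thesis using c1 c2 c3 by blast
  qed
  have inv0: "inv_measure \<nu>0" and e0: "emeasure \<nu>0 X0 = 1" using \<nu>0 unfolding inv_measure_on_def by auto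
  have top0: "top_entropy X0 = 0"
  proof -
    have b1: "?b + 1 > ?b" by simp
    have "{ks_entropy \<nu> | \<nu>. inv_measure_on X0 \<nu>} = {0}"
    proof
      show "{ks_entropy \<nu> | \<nu>. inv_measure_on X0 \<nu>} \<subseteq> {0}"
        using key[OF b1] unfolding inv_measure_on_def by auto
      show "{0} \<subseteq> {ks_entropy \<nu> | \<nu>. inv_measure_on X0 \<nu>}"
        using key[OF b1 inv0] e0 \<nu>0 by auto
    qed
    thus ?thesis unfolding top_entropy_def by simp
  qed
  show ?thesis
    unfolding freezes_on_def
  proof (rule exI[of _ "?b"], intro allI impI conjI)
    fix b assume b: "b > ?b"
    have pr: "pressure (\<lambda>x. b * \<phi> x) = 0"
      unfolding pressure_def
    proof (rule cSup_eq_maximum)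
      have "ks_entropy \<nu>0 + integral\<^sup>L \<nu>0 (\<lambda>x. b * \<phi> x) = 0" using key[OF b inv0] e0 by blast
      thus "0 \<in> {ks_entropy \<nu> + integral\<^sup>L \<nu> (\<lambda>x. b * \<phi> x) | \<nu>. inv_measure \<nu>}"
        using inv0 by (intro CollectI exI[of _ \<nu>0]) simp
      fix y assume "y \<in> {ks_entropy \<nu> + integral\<^sup>L \<nu> (\<lambda>x. b * \<phi> x) | \<nu>. inv_measure \<nu>}"
      thus "y \<le> 0" using key[OF b] by blast
    qed
    show "pressure (\<lambda>x. b * \<phi> x) = top_entropy X0" using pr top0 by simp
    fix \<mu>
    show "equilibrium_state (\<lambda>x. b * \<phi> x) \<mu> = max_entropy_measure_on X0 \<mu>"
      unfolding equilibrium_state_def max_entropy_measure_on_def inv_measure_on_def pr top0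
      using key[OF b, of \<mu>] by auto
  qed
qed

end
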